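(* Let $\alpha,\beta,\omega>0$ and $\rho\in\mathbb R$ be fixed. Let $h_1,h_2,H$ be real analytic functions on a neighborhood of $(0,0)\in\mathbb R^2$ with $h_1(0,0)=h_2(0,0)=0$, and consider, for a small parameter $\mu\ge0$, the system $$\frac{d\xi}{dt}=-\alpha\xi-\mu(1+h_1(\xi,\eta))(\rho H(\xi,\eta)+\sin\theta),\quad \frac{d\eta}{dt}=\beta\eta+\mu(1+h_2(\xi,\eta))(\rho H(\xi,\eta)+\sin\theta),\quad \frac{d\theta}{dt}=\omega.$$ Then (for $\mu\in[0,\mu_0]$ with $\mu_0>0$ sufficiently small) this system has a unique solution of the form $\xi=\mu\phi(\theta;\mu)$, $\eta=\mu\psi(\theta;\mu)$, $\theta=\omega t$, with $\phi(\theta+2\pi;\mu)=\phi(\theta;\mu)$ and $\psi(\theta+2\pi;\mu)=\psi(\theta;\mu)$. Moreover, the $C^3$ norms of $\phi$ and $\psi$, regarded as functions of $(\theta,\mu)$, are bounded by a constant $K$. *)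

theory Defs
  imports "HOL-Analysis.Analysis"
begin

definition real_analytic2_on :: "(real \<Rightarrow> real \<Rightarrow> real) \<Rightarrow> (real \<times> real) set \<Rightarrow> bool" where
  "real_analytic2_on f U \<longleftrightarrow> open U \<and>
     (\<forall>(a,b)\<in>U. \<exists>r>0. \<exists>c::nat \<Rightarrow> nat \<Rightarrow> real.
        \<forall>x y. (x - a)^2 + (y - b)^2 < r^2 \<longrightarrow>
          ((\<lambda>(i,j). c i j * (x - a)^i * (y - b)^j) has_sum f x y) UNIV)"

text \<open>f, as a function of (theta, mu) on R x M, is C^3 with C^3 norm at most K:
  P i j is the partial derivative d^i/dtheta^i d^j/dmu^j f (one-sided in mu at the
  boundary of M), all partials of order at most 3 exist, are jointly continuous and
  bounded by K.\<close>
definition C3_bounded :: "real set \<Rightarrow> real \<Rightarrow> (real \<Rightarrow> real \<Rightarrow> real) \<Rightarrow> bool" where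
  "C3_bounded M K f \<longleftrightarrow> (\<exists>P::nat \<Rightarrow> nat \<Rightarrow> real \<Rightarrow> real \<Rightarrow> real. P 0 0 = f \<and>
     (\<forall>i j. i + j < 3 \<longrightarrow> (\<forall>\<theta>. \<forall>m\<in>M.
         ((\<lambda>s. P i j s m) has_real_derivative P (Suc i) j \<theta> m) (at \<theta>) \<and>
         ((\<lambda>s. P i j \<theta> s) has_real_derivative P i (Suc j) \<theta> m) (at m within M))) \<and>
     (\<forall>i j. i + j \<le> 3 \<longrightarrow> continuous_on (UNIV \<times> M) (\<lambda>(\<theta>, m). P i j \<theta> m) \<and>
         (\<forall>\<theta>. \<forall>m\<in>M. \<bar>P i j \<theta> m\<bar> \<le> K)))"

definition is_solution ::
  "real \<Rightarrow> real \<Rightarrow> real \<Rightarrow> real \<Rightarrow> (real \<Rightarrow> real \<Rightarrow> real) \<Rightarrow> (real \<Rightarrow> real \<Rightarrow> real)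
   \<Rightarrow> (real \<Rightarrow> real \<Rightarrow> real) \<Rightarrow> real \<Rightarrow> (real \<Rightarrow> real) \<Rightarrow> (real \<Rightarrow> real) \<Rightarrow> bool" where
  "is_solution \<alpha> \<beta> \<omega> \<rho> h1 h2 H \<mu> x y \<longleftrightarrow> (\<forall>t.
     (x has_real_derivative
        (- \<alpha> * x t - \<mu> * (1 + h1 (x t) (y t)) * (\<rho> * H (x t) (y t) + sin (\<omega> * t)))) (at t) \<and>
     (y has_real_derivative
        (\<beta> * y t + \<mu> * (1 + h2 (x t) (y t)) * (\<rho> * H (x t) (y t) + sin (\<omega> * t)))) (at t))"

end

theory Submission
  imports Defs "HOL-Complex_Analysis.Complex_Analysis"
begin

definition strip :: "real \<Rightarrow> complex set" where "strip a = {z. \<bar>Im z\<bar> < a}"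

lemma open_strip: "open (strip a)"
  unfolding strip_def by (intro open_Collect_less continuous_intros)

lemma convex_strip: "convex (strip a)"
  unfolding strip_def convex_def
proof (clarify)
  fix x y :: complex and u v :: real
  assume "\<bar>Im x\<bar> < a" "\<bar>Im y\<bar> < a" "0 \<le> u" "0 \<le> v" "u + v = 1"
  have "\<bar>Im (u *\<^sub>R x + v *\<^sub>R y)\<bar> \<le> u * \<bar>Im x\<bar> + v * \<bar>Im y\<bar>"
    using \<open>0 \<le> u\<close> \<open>0 \<le> v\<close> by (simp add: abs_mult) (metis abs_triangle_ineq abs_mult abs_of_nonneg)
  also have "\<dots> < u * a + v * a \<or> (u * \<bar>Im x\<bar> + v * \<bar>Im y\<bar> \<le> u * a + v * a)"
    using \<open>0 \<le> u\<close> \<open>0 \<le> v\<close> \<open>\<bar>Im x\<bar> < a\<close> \<open>\<bar>Im y\<bar> < a\<close>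
    by (simp add: add_mono mult_left_mono)
  show "\<bar>Im (u *\<^sub>R x + v *\<^sub>R y)\<bar> < a"
  proof -
    have "u * \<bar>Im x\<bar> + v * \<bar>Im y\<bar> < u * a + v * a"
    proof (cases "u = 0")
      case True then show ?thesis using \<open>u+v=1\<close> \<open>\<bar>Im y\<bar> < a\<close> by simp
    next
      case False then have "u > 0" using \<open>0 \<le> u\<close> by simp
      then have "u * \<bar>Im x\<bar> < u * a" using \<open>\<bar>Im x\<bar> < a\<close> by simp
      moreover have "v * \<bar>Im y\<bar> \<le> v * a" using \<open>0 \<le> v\<close> \<open>\<bar>Im y\<bar> < a\<close> by (simp add: mult_left_mono)
      ultimately show ?thesis by simp
    qed
    then show ?thesis using \<open>u+v=1\<close> \<open>\<bar>Im (u *\<^sub>R x + v *\<^sub>R y)\<bar> \<le> u * \<bar>Im x\<bar> + v * \<bar>Im y\<bar>\<close>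
      by (simp add: distrib_right[symmetric])
  qed
qed

lemma ball_strip: "z \<in> strip a' \<Longrightarrow> a' \<le> a \<Longrightarrow> ball z (a - a') \<subseteq> strip a"
  unfolding strip_def
proof clarify
  fix y assume "\<bar>Im z\<bar> < a'" "a' \<le> a" "y \<in> ball z (a - a')"
  then have "\<bar>Im y - Im z\<bar> < a - a'"
    using abs_Im_le_cmod[of "y - z"] by (simp add: dist_norm norm_minus_commute)
  then show "\<bar>Im y\<bar> < a" using \<open>\<bar>Im z\<bar> < a'\<close> by linarith
qed

lemma strip_shift: "z \<in> strip a \<Longrightarrow> z + of_real t \<in> strip a"
  by (simp add: strip_def)

lemma strip_shift': "z \<in> strip a \<Longrightarrow> z - of_real t \<in> strip a"
  by (simp add: strip_def)

lemma real_in_strip: "0 < a \<Longrightarrow> of_real t \<in> strip a"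
  by (simp add: strip_def)

lemma cauchy_d1:
  assumes "f holomorphic_on A" "open A" "ball z e \<subseteq> A" "e > 0" "\<forall>x\<in>A. norm (f x) \<le> M"
  shows "norm (deriv f z) \<le> 2 * M / e"
proof -
  have "cball z (e/2) \<subseteq> ball z e" using assms(4) by (simp add: cball_subset_ball_iff)
  then have sub: "cball z (e/2) \<subseteq> A" using assms(3) by blast
  have "norm ((deriv ^^ 1) f z) \<le> fact 1 * M / (e/2)^1"
  proof (rule Cauchy_inequality)
    show "f holomorphic_on ball z (e/2)" using assms(1) sub ball_subset_cball holomorphic_on_subset by blast
    show "continuous_on (cball z (e/2)) f" using assms(1) sub holomorphic_on_imp_continuous_on holomorphic_on_subset by blast
    show "0 < e/2" using assms by simp
    show "norm (f x) \<le> M" if "norm (z - x) = e/2" for x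
      using that sub assms(5) by (auto simp: dist_norm)
  qed
  then show ?thesis by (simp add: mult.commute)
qed

lemma cauchy_d2:
  assumes "f holomorphic_on A" "open A" "ball z e \<subseteq> A" "e > 0" "\<forall>x\<in>A. norm (f x) \<le> M"
  shows "norm (deriv (deriv f) z) \<le> 8 * M / e^2"
proof -
  have "cball z (e/2) \<subseteq> ball z e" using assms(4) by (simp add: cball_subset_ball_iff)
  then have sub: "cball z (e/2) \<subseteq> A" using assms(3) by blast
  have "norm ((deriv ^^ 2) f z) \<le> fact 2 * M / (e/2)^2"
  proof (rule Cauchy_inequality)
    show "f holomorphic_on ball z (e/2)" using assms(1) sub ball_subset_cball holomorphic_on_subset by blast
    show "continuous_on (cball z (e/2)) f" using assms(1) sub holomorphic_on_imp_continuous_on holomorphic_on_subset by blast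
    show "0 < e/2" using assms by simp
    show "norm (f x) \<le> M" if "norm (z - x) = e/2" for x
      using that sub assms(5) by (auto simp: dist_norm)
  qed
  then show ?thesis by (simp add: numeral_2_eq_2 power2_eq_square field_simps)
qed

lemma taylor2:
  assumes hol: "f holomorphic_on A" and A: "open A" and sub: "ball z e \<subseteq> A" and e: "e > 0"
    and M: "\<forall>x\<in>A. norm (f x) \<le> M" and h: "norm h < e/2"
  shows "norm (f (z+h) - f z - h * deriv f z) \<le> 32 * M / e^2 * norm h ^ 2"
proof -
  let ?S = "ball z (e/2)"
  have "?S \<subseteq> ball z e" using e by (simp add: ball_subset_ball_iff)
  then have S: "?S \<subseteq> A" using sub by blast
  have "norm ((\<lambda>i. (deriv ^^ i) f) 0 (z+h) - (\<Sum>i\<le>1. (\<lambda>i. (deriv ^^ i) f) i z * ((z+h)-z) ^ i / (fact i)))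
        \<le> (32 * M / e^2) * norm ((z+h) - z)^(Suc 1) / fact 1"
  proof (rule complex_Taylor[where S="?S"])
    show "convex ?S" by simp
    show "((deriv ^^ i) f has_field_derivative (deriv ^^ Suc i) f x) (at x within ?S)"
      if "x \<in> ?S" "i \<le> 1" for i x
    proof -
      have "(deriv ^^ i) f holomorphic_on A" using hol A by (rule holomorphic_higher_deriv)
      then have "((deriv ^^ i) f has_field_derivative deriv ((deriv ^^ i) f) x) (at x)"
        using A S that(1) by (meson holomorphic_derivI subsetD has_field_derivative_at_within)
      then show ?thesis by (simp add: has_field_derivative_at_within)
    qed
    show "norm ((deriv ^^ Suc 1) f x) \<le> 32 * M / e^2" if "x \<in> ?S" for x
    proof -
      have "ball x (e/2) \<subseteq> ball z e" using that by (simp add: ball_subset_ball_iff dist_commute)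
      then have "ball x (e/2) \<subseteq> A" using sub by blast
      then have "norm (deriv (deriv f) x) \<le> 8 * M / (e/2)^2"
        using cauchy_d2[OF hol A _ _ M] e by simp
      then show ?thesis by (simp add: numeral_2_eq_2 power2_eq_square field_simps)
    qed
    show "z \<in> ?S" using e by simp
    show "z + h \<in> ?S" using h by (simp add: dist_norm)
  qed
  then show ?thesis by (simp add: algebra_simps power2_eq_square)
qed

lemma lip_ball:
  assumes hol: "f holomorphic_on A" and A: "open A" and sub: "ball z e \<subseteq> A" and e: "e > 0"
    and M: "\<forall>x\<in>A. norm (f x) \<le> M" and x: "x \<in> ball z (e/2)" and y: "y \<in> ball z (e/2)"
  shows "norm (f x - f y) \<le> 4 * M / e * norm (x - y)"
proof (rule field_differentiable_bound[where S="ball z (e/2)" and f'="deriv f"])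
  show "convex (ball z (e/2))" by simp
  have "ball z (e/2) \<subseteq> ball z e" using e by (simp add: ball_subset_ball_iff)
  then have S: "ball z (e/2) \<subseteq> A" using sub by blast
  show "(f has_field_derivative deriv f u) (at u within ball z (e/2))" if "u \<in> ball z (e/2)" for u
    using holomorphic_derivI[OF hol A] that S by (meson has_field_derivative_at_within subsetD)
  show "norm (deriv f u) \<le> 4 * M / e" if "u \<in> ball z (e/2)" for u
  proof -
    have "ball u (e/2) \<subseteq> ball z e" using that by (simp add: ball_subset_ball_iff dist_commute)
    then have "ball u (e/2) \<subseteq> A" using sub by blast
    then have "norm (deriv f u) \<le> 2 * M / (e/2)"
      using cauchy_d1[OF hol A _ _ M, of u "e/2"] e by simp
    then show ?thesis by simp
  qed
qed (use x y in auto)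

definition Good :: "complex set \<Rightarrow> complex set \<Rightarrow> (complex \<Rightarrow> complex \<Rightarrow> complex) \<Rightarrow> bool" where
  "Good A B F \<longleftrightarrow> (\<forall>w\<in>B. (\<lambda>z. F z w) holomorphic_on A) \<and> (\<forall>z\<in>A. (\<lambda>w. F z w) holomorphic_on B)
     \<and> (\<exists>M. \<forall>z\<in>A. \<forall>w\<in>B. norm (F z w) \<le> M)"

definition Dz :: "(complex \<Rightarrow> complex \<Rightarrow> complex) \<Rightarrow> complex \<Rightarrow> complex \<Rightarrow> complex" where
  "Dz F = (\<lambda>z w. deriv (\<lambda>s. F s w) z)"

definition Dw :: "(complex \<Rightarrow> complex \<Rightarrow> complex) \<Rightarrow> complex \<Rightarrow> complex \<Rightarrow> complex" where
  "Dw F = (\<lambda>z w. deriv (\<lambda>s. F z s) w)"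

definition flp :: "(complex \<Rightarrow> complex \<Rightarrow> complex) \<Rightarrow> complex \<Rightarrow> complex \<Rightarrow> complex" where
  "flp F = (\<lambda>w z. F z w)"

lemma Good_flp: "Good A B F \<longleftrightarrow> Good B A (flp F)"
  unfolding Good_def flp_def by blast

lemma Dw_flp: "Dw F = flp (Dz (flp F))"
  unfolding Dw_def Dz_def flp_def by simp

lemma flp_flp[simp]: "flp (flp F) = F" unfolding flp_def by simp

lemma Good_subset: "Good A B F \<Longrightarrow> A' \<subseteq> A \<Longrightarrow> B' \<subseteq> B \<Longrightarrow> Good A' B' F"
  unfolding Good_def by (meson holomorphic_on_subset subsetD)

lemma Good_cont:
  assumes G: "Good A B F" and A: "open A" and B: "open B"
  shows "continuous_on (A \<times> B) (\<lambda>p. F (fst p) (snd p))"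
proof -
  obtain M where M: "\<forall>z\<in>A. \<forall>w\<in>B. norm (F z w) \<le> M" using G unfolding Good_def by blast
  have hz: "(\<lambda>z. F z w) holomorphic_on A" if "w \<in> B" for w using G that unfolding Good_def by blast
  have hw: "(\<lambda>w. F z w) holomorphic_on B" if "z \<in> A" for z using G that unfolding Good_def by blast
  have "isCont (\<lambda>p. F (fst p) (snd p)) p" if p: "p \<in> A \<times> B" for p
  proof -
    obtain z0 w0 where p0: "p = (z0, w0)" "z0 \<in> A" "w0 \<in> B" using p by auto
    obtain e1 where e1: "e1 > 0" "ball z0 e1 \<subseteq> A" using A p0 openE by blast
    obtain e2 where e2: "e2 > 0" "ball w0 e2 \<subseteq> B" using B p0 openE by blast
    define e where "e = min e1 e2"
    have e: "e > 0" "ball z0 e \<subseteq> A" "ball w0 e \<subseteq> B" using e1 e2 unfolding e_def by auto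
    let ?S = "ball z0 (e/2) \<times> ball w0 (e/2)"
    have "lipschitz_on (8 * M / e) ?S (\<lambda>p. F (fst p) (snd p))"
    proof (rule lipschitz_onI)
      fix x y assume x: "x \<in> ?S" and y: "y \<in> ?S"
      have "ball z0 (e/2) \<subseteq> ball z0 e" using e by (simp add: ball_subset_ball_iff)
      then have fyA: "fst y \<in> A" using y e by auto
      have "ball w0 (e/2) \<subseteq> ball w0 e" using e by (simp add: ball_subset_ball_iff)
      then have sxB: "snd x \<in> B" using x e by auto
      have M1: "\<forall>u\<in>A. norm (F u (snd x)) \<le> M" using M sxB by blast
      have M2: "\<forall>u\<in>B. norm (F (fst y) u) \<le> M" using M fyA by blast
      have 1: "norm (F (fst x) (snd x) - F (fst y) (snd x)) \<le> 4 * M / e * norm (fst x - fst y)"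
        using lip_ball[OF hz[OF sxB] A e(2) e(1) M1] x y by (auto simp: mem_Times_iff)
      have 2: "norm (F (fst y) (snd x) - F (fst y) (snd y)) \<le> 4 * M / e * norm (snd x - snd y)"
        using lip_ball[OF hw[OF fyA] B e(3) e(1) M2] x y by (auto simp: mem_Times_iff)
      have "M \<ge> 0" using M p0 norm_ge_zero order_trans by blast
      then have Me: "4 * M / e \<ge> 0" using e by simp
      have d1: "norm (fst x - fst y) \<le> dist x y" using dist_fst_le[of x y] by (simp add: dist_norm)
      have d2: "norm (snd x - snd y) \<le> dist x y" using dist_snd_le[of x y] by (simp add: dist_norm)
      have "dist (F (fst x) (snd x)) (F (fst y) (snd y))
          \<le> norm (F (fst x) (snd x) - F (fst y) (snd x)) + norm (F (fst y) (snd x) - F (fst y) (snd y))"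
        by (metis dist_norm norm_triangle_ineq diff_add_cancel add_diff_eq)
      also have "\<dots> \<le> 4 * M / e * norm (fst x - fst y) + 4 * M / e * norm (snd x - snd y)"
        using 1 2 by simp
      also have "\<dots> \<le> 4 * M / e * dist x y + 4 * M / e * dist x y"
        using d1 d2 Me by (intro add_mono mult_left_mono) auto
      also have "\<dots> = 8 * M / e * dist x y" by simp
      finally show "dist (F (fst x) (snd x)) (F (fst y) (snd y)) \<le> 8 * M / e * dist x y" .
    next
      have "M \<ge> 0" using M p0 norm_ge_zero order_trans by blast
      then show "0 \<le> 8 * M / e" using e by simp
    qed
    then have "continuous_on ?S (\<lambda>p. F (fst p) (snd p))" by (rule lipschitz_on_continuous_on)
    moreover have "p \<in> interior ?S" using p0 e by (simp add: interior_open open_Times)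
    ultimately show ?thesis by (rule continuous_on_interior)
  qed
  then show ?thesis by (simp add: continuous_at_imp_continuous_on)
qed

lemma holo_local:
  assumes "open S" "\<And>x. x \<in> S \<Longrightarrow> f field_differentiable (at x)"
  shows "f holomorphic_on S"
  using assms by (simp add: field_differentiable_at_within holomorphic_on_def)

lemma uniform_limit_bound:
  fixes f :: "nat \<Rightarrow> 'a \<Rightarrow> 'b::metric_space"
  assumes "\<And>n x. x \<in> S \<Longrightarrow> dist (f n x) (l x) \<le> b n" and "b \<longlonglongrightarrow> 0"
  shows "uniform_limit S f l sequentially"
proof (rule uniform_limitI)
  fix e :: real assume "e > 0"
  then have "eventually (\<lambda>n. b n < e) sequentially" using assms(2) by (simp add: order_tendstoD(2))
  then show "\<forall>\<^sub>F n in sequentially. \<forall>x\<in>S. dist (f n x) (l x) < e"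
    by (rule eventually_mono) (use assms(1) le_less_trans in blast)
qed

lemma Dz_good:
  assumes G: "Good A B F" and A: "open A" and B: "open B" and e: "e > 0"
    and A': "\<And>z. z \<in> A' \<Longrightarrow> ball z e \<subseteq> A"
  shows "Good A' B (Dz F)"
proof -
  obtain M where M: "\<forall>z\<in>A. \<forall>w\<in>B. norm (F z w) \<le> M" using G unfolding Good_def by blast
  have hz: "(\<lambda>z. F z w) holomorphic_on A" if "w \<in> B" for w using G that unfolding Good_def by blast
  have hw: "(\<lambda>w. F z w) holomorphic_on B" if "z \<in> A" for z using G that unfolding Good_def by blast
  have A'A: "A' \<subseteq> A" using A' e by (meson centre_in_ball subsetD subsetI)
  have i: "(\<lambda>z. Dz F z w) holomorphic_on A'" if "w \<in> B" for w
  proof -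
    have "deriv (\<lambda>z. F z w) holomorphic_on A" using holomorphic_deriv[OF hz[OF that] A] .
    then show ?thesis using A'A unfolding Dz_def by (simp add: holomorphic_on_subset)
  qed
  have ii: "norm (Dz F z w) \<le> 2 * M / e" if "z \<in> A'" "w \<in> B" for z w
    unfolding Dz_def using cauchy_d1[OF hz[OF that(2)] A A'[OF that(1)] e] M that(2) by blast
  have iii: "(\<lambda>w. Dz F z w) holomorphic_on B" if z: "z \<in> A'" for z
  proof (rule holo_local[OF B])
    fix w0 assume w0: "w0 \<in> B"
    obtain r0 where r0: "r0 > 0" "ball w0 r0 \<subseteq> B" using B w0 openE by blast
    define r where "r = r0 / 2"
    have r: "r > 0" "cball w0 r \<subseteq> B" using r0 unfolding r_def
      by (auto simp: subset_eq dist_commute)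
    define hn where "hn = (\<lambda>n::nat. complex_of_real (e / (4 * Suc n)))"
    have hn3: "norm (hn n) = e / (4 * Suc n)" for n
      unfolding hn_def norm_of_real using e by simp
    have hn: "norm (hn n) < e/2" "hn n \<noteq> 0" "norm (hn n) = e / (4 * Suc n)" for n
    proof -
      show "norm (hn n) = e / (4 * Suc n)" by (rule hn3)
      have "e / (4 * Suc n) < e / 2" using e by (intro divide_strict_left_mono) auto
      then show "norm (hn n) < e/2" using hn3 by simp
      have "e / (4 * Suc n) > 0" using e by simp
      then show "hn n \<noteq> 0" using hn3[of n] by auto
    qed
    define q where "q = (\<lambda>n w. (F (z + hn n) w - F z w) / hn n)"
    have zA: "z \<in> A" using A'A z by blast
    have zhA: "z + hn n \<in> A" for n
    proof -
      have "z + hn n \<in> ball z e" using hn(1)[of n] e by (simp add: dist_norm)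
      then show ?thesis using A'[OF z] by blast
    qed
    have "uniform_limit (cball w0 r) q (\<lambda>w. Dz F z w) sequentially"
    proof (rule uniform_limit_bound)
      fix n w assume w: "w \<in> cball w0 r"
      then have wB: "w \<in> B" using r by blast
      have Mw: "\<forall>x\<in>A. norm (F x w) \<le> M" using M wB by blast
      have T: "norm (F (z + hn n) w - F z w - hn n * Dz F z w) \<le> 32 * M / e^2 * norm (hn n) ^ 2"
        using taylor2[OF hz[OF wB] A A'[OF z] e Mw hn(1)] unfolding Dz_def by simp
      have "q n w - Dz F z w = (F (z + hn n) w - F z w - hn n * Dz F z w) / hn n"
        using hn(2) unfolding q_def by (simp add: field_simps)
      then have "dist (q n w) (Dz F z w) = norm (F (z + hn n) w - F z w - hn n * Dz F z w) / norm (hn n)"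
        by (simp add: dist_norm norm_divide)
      also have "\<dots> \<le> 32 * M / e^2 * norm (hn n) ^ 2 / norm (hn n)"
        using T hn(2) by (intro divide_right_mono) auto
      also have "\<dots> = 32 * M / e^2 * norm (hn n)"
        using hn(2) by (simp add: power2_eq_square)
      also have "\<dots> = 8 * M / e * (1 / Suc n)"
      proof -
        have eq: "\<And>k::real. k > 0 \<Longrightarrow> 32*M/e^2*(e/(4*k)) = 8*M/e*(1/k)"
          using e by (simp add: power2_eq_square field_simps)
        show ?thesis unfolding hn3 of_nat_mult of_nat_numeral by (rule eq) (simp del: of_nat_Suc)
      qed
      finally show "dist (q n w) (Dz F z w) \<le> 8 * M / e * (1 / Suc n)" .
    next
      show "(\<lambda>n. 8 * M / e * (1 / real (Suc n))) \<longlonglongrightarrow> 0"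
        by (intro tendsto_mult_right_zero LIMSEQ_Suc lim_const_over_n[of 1, simplified] )
    qed
    moreover have "\<forall>\<^sub>F n in sequentially. continuous_on (cball w0 r) (q n) \<and> q n holomorphic_on ball w0 r"
    proof (intro always_eventually allI conjI)
      fix n
      have "q n holomorphic_on B" unfolding q_def using hw[OF zA] hw[OF zhA[of n]] hn(2)
        by (intro holomorphic_intros) auto
      then show "continuous_on (cball w0 r) (q n)" "q n holomorphic_on ball w0 r"
        using r ball_subset_cball holomorphic_on_imp_continuous_on holomorphic_on_subset by blast+
    qed
    ultimately obtain "(\<lambda>w. Dz F z w) holomorphic_on ball w0 r"
      using holomorphic_uniform_limit by (metis trivial_limit_sequentially)
    then show "(\<lambda>w. Dz F z w) field_differentiable at w0"
      using r(1) holomorphic_on_imp_differentiable_at by auto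
  qed
  show ?thesis unfolding Good_def using i ii iii by blast
qed

lemma Dw_good:
  assumes G: "Good A B F" and A: "open A" and B: "open B" and e: "e > 0"
    and B': "\<And>w. w \<in> B' \<Longrightarrow> ball w e \<subseteq> B"
  shows "Good A B' (Dw F)"
proof -
  have "Good B A (flp F)" using G Good_flp by blast
  then have "Good B' A (Dz (flp F))" using Dz_good B A e B' by blast
  then show ?thesis unfolding Dw_flp using Good_flp flp_flp by metis
qed

lemma D_comm:
  assumes G: "Good A B F" and A: "open A" and B: "open B" and e: "e > 0"
    and z: "ball z e \<subseteq> A" and w: "ball w e \<subseteq> B"
  shows "Dw (Dz F) z w = Dz (Dw F) z w"
proof -
  obtain M where M: "\<forall>z\<in>A. \<forall>w\<in>B. norm (F z w) \<le> M" using G unfolding Good_def by blast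
  have hz: "(\<lambda>z. F z w) holomorphic_on A" if "w \<in> B" for w using G that unfolding Good_def by blast
  have hw: "(\<lambda>w. F z w) holomorphic_on B" if "z \<in> A" for z using G that unfolding Good_def by blast
  have zA: "z \<in> A" using z e by auto
  have wB: "w \<in> B" using w e by auto
  have "Good A {w} (Dw F)" using Dw_good[OF G A B e, of "{w}"] w by blast
  then have hDw: "(\<lambda>s. Dw F s w) holomorphic_on A" unfolding Good_def by blast
  define D where "D = Dz (Dw F) z w"
  have d3: "((\<lambda>s. Dw F s w) has_field_derivative D) (at z)"
    unfolding D_def Dz_def using holomorphic_derivI[OF hDw A zA] by simp
  have key: "norm ((Dz F z v - Dz F z w)/(v - w) - D) \<le> 64*M/e^3 * norm (v - w)"
    if v: "v \<in> ball w (e/2)" "v \<noteq> w" for v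
  proof -
    define d where "d = v - w"
    have d: "norm d < e/2" "d \<noteq> 0" "v = w + d" using v unfolding d_def by (auto simp: dist_norm norm_minus_commute)
    have "ball w (e/2) \<subseteq> ball w e" using e by (simp add: ball_subset_ball_iff)
    then have vB: "v \<in> B" using v w by blast
    define Q where "Q = (\<lambda>s. (F s v - F s w)/(v-w) - Dw F s w)"
    have Qh: "Q holomorphic_on A" unfolding Q_def using hz[OF vB] hz[OF wB] hDw
      by (intro holomorphic_intros) auto
    have QM: "\<forall>s\<in>A. norm (Q s) \<le> 32*M/e^2 * norm (v-w)"
    proof
      fix s assume s: "s \<in> A"
      have Ms: "\<forall>x\<in>B. norm (F s x) \<le> M" using M s by blast
      have T: "norm (F s (w+d) - F s w - d * Dw F s w) \<le> 32 * M / e^2 * norm d ^ 2"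
        using taylor2[OF hw[OF s] B w e Ms d(1)] unfolding Dw_def by simp
      have "Q s = (F s (w+d) - F s w - d * Dw F s w) / d"
        unfolding Q_def d_def using d(2) unfolding d_def by (simp add: field_simps)
      then have "norm (Q s) = norm (F s (w+d) - F s w - d * Dw F s w) / norm d"
        by (simp add: norm_divide)
      also have "\<dots> \<le> 32 * M / e^2 * norm d ^ 2 / norm d"
        using T by (intro divide_right_mono) auto
      also have "\<dots> = 32 * M / e^2 * norm d" using d(2) by (simp add: power2_eq_square)
      finally show "norm (Q s) \<le> 32*M/e^2 * norm (v-w)" unfolding d_def .
    qed
    have "norm (deriv Q z) \<le> 2 * (32*M/e^2*norm(v-w)) / e"
      by (rule cauchy_d1[OF Qh A z e QM])
    also have "\<dots> = 64*M/e^3 * norm (v - w)" by (simp add: power3_eq_cube power2_eq_square)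
    finally have bd: "norm (deriv Q z) \<le> 64*M/e^3 * norm (v - w)" .
    have d1: "((\<lambda>s. F s v) has_field_derivative Dz F z v) (at z)"
      unfolding Dz_def using holomorphic_derivI[OF hz[OF vB] A zA] by simp
    have d2: "((\<lambda>s. F s w) has_field_derivative Dz F z w) (at z)"
      unfolding Dz_def using holomorphic_derivI[OF hz[OF wB] A zA] by simp
    have "(Q has_field_derivative (Dz F z v - Dz F z w)/(v-w) - D) (at z)"
      unfolding Q_def by (intro DERIV_diff DERIV_cdivide d1 d2 d3)
    then have "deriv Q z = (Dz F z v - Dz F z w)/(v-w) - D" by (rule DERIV_imp_deriv)
    then show ?thesis using bd by simp
  qed
  have ev: "eventually (\<lambda>v. norm ((Dz F z v - Dz F z w)/(v - w) - D) \<le> 64*M/e^3 * norm (v - w)) (at w)"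
    unfolding eventually_at using e key by (intro exI[of _ "e/2"]) (auto simp: dist_commute)
  have "((\<lambda>v. v - w) \<longlongrightarrow> 0) (at w)"
    using tendsto_diff[OF tendsto_ident_at[of w UNIV] tendsto_const[of w]] by simp
  then have "((\<lambda>v. 64*M/e^3 * norm (v - w)) \<longlongrightarrow> 0) (at w)"
    by (intro tendsto_mult_right_zero tendsto_norm_zero)
  then have "((\<lambda>v. (Dz F z v - Dz F z w)/(v - w) - D) \<longlongrightarrow> 0) (at w)"
    by (rule Lim_null_comparison[OF ev])
  then have "((\<lambda>v. (Dz F z v - Dz F z w)/(v - w)) \<longlongrightarrow> D) (at w)" by (rule LIM_zero_cancel)
  then have "((\<lambda>v. Dz F z v) has_field_derivative D) (at w)" by (simp add: has_field_derivative_iff)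
  then show ?thesis unfolding D_def Dw_def[of "Dz F"] by (rule DERIV_imp_deriv)
qed

lemma analytic_ext:
  assumes an: "real_analytic2_on h U" and U0: "(0,0) \<in> U"
  shows "\<exists>r0>0. \<exists>hc S L. S \<ge> 0 \<and> L \<ge> 0 \<and>
   (\<forall>X A B. open X \<longrightarrow> A holomorphic_on X \<longrightarrow> B holomorphic_on X \<longrightarrow>
       (\<forall>s\<in>X. norm (A s) \<le> r0 \<and> norm (B s) \<le> r0) \<longrightarrow> (\<lambda>s. hc (A s) (B s)) holomorphic_on X) \<and>
   (\<forall>z w. norm z \<le> r0 \<longrightarrow> norm w \<le> r0 \<longrightarrow> norm (hc z w) \<le> S) \<and>
   (\<forall>z w z' w'. norm z \<le> r0/2 \<longrightarrow> norm w \<le> r0/2 \<longrightarrow> norm z' \<le> r0/2 \<longrightarrow> norm w' \<le> r0/2 \<longrightarrow>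
       norm (hc z w - hc z' w') \<le> L * (norm (z-z') + norm (w-w'))) \<and>
   (\<forall>x y. \<bar>x\<bar> \<le> r0 \<longrightarrow> \<bar>y\<bar> \<le> r0 \<longrightarrow> hc (of_real x) (of_real y) = of_real (h x y))"
proof -
  obtain r c where r: "r > 0" and c: "\<And>x y. x^2 + y^2 < r^2 \<Longrightarrow>
      ((\<lambda>(i,j). c i j * x^i * y^j) has_sum h x y) UNIV"
  proof -
    from an U0 obtain r c where "r > 0" "\<forall>x y. (x - 0)^2 + (y - 0)^2 < r^2 \<longrightarrow>
      ((\<lambda>(i,j). c i j * (x - 0)^i * (y - 0)^j) has_sum h x y) UNIV"
      unfolding real_analytic2_on_def by fast
    then show ?thesis using that[of r c] by simp
  qed
  define r0 where "r0 = r/2"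
  have r0: "r0 > 0" using r unfolding r0_def by simp
  have inr: "x^2 + y^2 < r^2" if "\<bar>x\<bar> \<le> r0" "\<bar>y\<bar> \<le> r0" for x y :: real
  proof -
    have "x^2 \<le> r0^2" "y^2 \<le> r0^2" using that r0 by (auto intro: power_mono simp flip: abs_le_square_iff)
    moreover have "2 * r0^2 < r^2" using r unfolding r0_def by (simp add: power2_eq_square)
    ultimately show ?thesis by linarith
  qed
  have hs: "((\<lambda>p. c (fst p) (snd p) * x ^ fst p * y ^ snd p) has_sum h x y) UNIV"
    if "\<bar>x\<bar> \<le> r0" "\<bar>y\<bar> \<le> r0" for x y
    using c[OF inr[OF that]] unfolding case_prod_unfold .
  define M where "M = (\<lambda>p. \<bar>c (fst p) (snd p)\<bar> * r0 ^ fst p * r0 ^ snd p)"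
  have "(\<lambda>p. c (fst p) (snd p) * r0 ^ fst p * r0 ^ snd p) summable_on UNIV"
  proof -
    have "\<bar>r0\<bar> \<le> r0" using r0 by simp
    then show ?thesis using hs[of r0 r0] unfolding summable_on_def by blast
  qed
  then have "(\<lambda>p. norm (c (fst p) (snd p) * r0 ^ fst p * r0 ^ snd p)) summable_on UNIV"
    by (rule summable_on_iff_abs_summable_on_real[THEN iffD1])
  moreover have "(\<lambda>p. norm (c (fst p) (snd p) * r0 ^ fst p * r0 ^ snd p)) = M"
    unfolding M_def using r0 by (auto simp: abs_mult power_abs fun_eq_iff)
  ultimately have Msum: "M summable_on UNIV" by simp
  have M0: "M p \<ge> 0" for p unfolding M_def using r0 by simp
  define f where "f = (\<lambda>p (z::complex) (w::complex). of_real (c (fst p) (snd p)) * z ^ fst p * w ^ snd p)"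
  define hc where "hc = (\<lambda>z w. \<Sum>\<^sub>\<infinity>p. f p z w)"
  define S where "S = (\<Sum>\<^sub>\<infinity>p. M p)"
  have fM: "norm (f p z w) \<le> M p" if "norm z \<le> r0" "norm w \<le> r0" for p z w
  proof -
    have "norm (f p z w) = \<bar>c (fst p) (snd p)\<bar> * norm z ^ fst p * norm w ^ snd p"
      unfolding f_def by (simp add: norm_mult norm_power)
    also have "\<dots> \<le> \<bar>c (fst p) (snd p)\<bar> * r0 ^ fst p * r0 ^ snd p"
      using that r0 by (intro mult_mono power_mono mult_nonneg_nonneg) auto
    finally show ?thesis unfolding M_def .
  qed
  have S0: "S \<ge> 0" unfolding S_def using M0 by (simp add: infsum_nonneg)
  have bnd: "norm (hc z w) \<le> S" if "norm z \<le> r0" "norm w \<le> r0" for z w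
  proof -
    have ab: "(\<lambda>p. norm (f p z w)) summable_on UNIV"
      by (rule summable_on_comparison_test[OF Msum]) (use fM[OF that] in auto)
    have "norm (hc z w) \<le> (\<Sum>\<^sub>\<infinity>p. norm (f p z w))" unfolding hc_def by (rule norm_infsum_bound[OF ab])
    also have "\<dots> \<le> S" unfolding S_def by (rule infsum_mono[OF ab Msum]) (use fM[OF that] in auto)
    finally show ?thesis .
  qed
  have holo: "(\<lambda>s. hc (A s) (B s)) holomorphic_on X"
    if X: "open X" and A: "A holomorphic_on X" and B: "B holomorphic_on X"
      and AB: "\<forall>s\<in>X. norm (A s) \<le> r0 \<and> norm (B s) \<le> r0" for X A B
  proof (rule holo_local[OF X])
    fix s0 assume s0: "s0 \<in> X"
    obtain r1 where r1: "r1 > 0" "ball s0 r1 \<subseteq> X" using X s0 openE by blast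
    define r2 where "r2 = r1 / 2"
    have r2: "r2 > 0" "cball s0 r2 \<subseteq> X" using r1 unfolding r2_def
      by (auto simp: subset_eq dist_commute)
    have ul: "uniform_limit (cball s0 r2) (\<lambda>P s. \<Sum>p\<in>P. f p (A s) (B s)) (\<lambda>s. hc (A s) (B s))
              (finite_subsets_at_top UNIV)"
      unfolding hc_def by (rule Weierstrass_m_test_general[OF _ Msum]) (use AB r2 fM in blast)
    have "\<forall>\<^sub>F P in finite_subsets_at_top UNIV. continuous_on (cball s0 r2) (\<lambda>s. \<Sum>p\<in>P. f p (A s) (B s))
        \<and> (\<lambda>s. \<Sum>p\<in>P. f p (A s) (B s)) holomorphic_on ball s0 r2"
    proof (intro always_eventually allI conjI)
      fix P :: "(nat \<times> nat) set"
      have "(\<lambda>s. \<Sum>p\<in>P. f p (A s) (B s)) holomorphic_on X" unfolding f_def using A B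
        by (intro holomorphic_intros) auto
      then show "continuous_on (cball s0 r2) (\<lambda>s. \<Sum>p\<in>P. f p (A s) (B s))"
        "(\<lambda>s. \<Sum>p\<in>P. f p (A s) (B s)) holomorphic_on ball s0 r2"
        using r2 ball_subset_cball holomorphic_on_imp_continuous_on holomorphic_on_subset by blast+
    qed
    then obtain "(\<lambda>s. hc (A s) (B s)) holomorphic_on ball s0 r2"
      using holomorphic_uniform_limit[OF _ ul] by auto
    then show "(\<lambda>s. hc (A s) (B s)) field_differentiable at s0"
      using r2(1) holomorphic_on_imp_differentiable_at by auto
  qed
  define L where "L = 4 * S / r0"
  have L0: "L \<ge> 0" unfolding L_def using S0 r0 by simp
  have lip1: "norm (hc z w - hc z' w) \<le> L * norm (z - z')"
    if "norm z \<le> r0/2" "norm w \<le> r0/2" "norm z' \<le> r0/2" for z w z'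
  proof -
    have H: "(\<lambda>s. hc s w) holomorphic_on ball 0 r0"
      using holo[of "ball 0 r0" "\<lambda>s. s" "\<lambda>s. w"] that r0 by (auto intro: holomorphic_intros)
    have Hb: "\<forall>x\<in>ball 0 r0. norm (hc x w) \<le> S" using bnd that r0 by auto
    show ?thesis
    proof (rule field_differentiable_bound[where S="cball 0 (r0/2)" and f'="deriv (\<lambda>s. hc s w)" and f="\<lambda>s. hc s w"])
      show "convex (cball (0::complex) (r0/2))" by (rule convex_cball)
      show "((\<lambda>s. hc s w) has_field_derivative deriv (\<lambda>s. hc s w) u) (at u within cball 0 (r0/2))"
        if "u \<in> cball 0 (r0/2)" for u
      proof -
        have "u \<in> ball 0 r0" using that r0 by auto
        then show ?thesis using holomorphic_derivI[OF H] by (simp add: has_field_derivative_at_within)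
      qed
      show "norm (deriv (\<lambda>s. hc s w) u) \<le> L" if "u \<in> cball 0 (r0/2)" for u
      proof -
        have sub: "ball u (r0/2) \<subseteq> ball 0 r0" using that r0 by (auto simp: ball_subset_ball_iff dist_commute)
        have "norm (deriv (\<lambda>s. hc s w) u) \<le> 2 * S / (r0/2)"
          using cauchy_d1[OF H open_ball sub _ Hb] r0 by simp
        then show ?thesis unfolding L_def by simp
      qed
    qed (use that in auto)
  qed
  have lip2: "norm (hc z w - hc z w') \<le> L * norm (w - w')"
    if "norm z \<le> r0/2" "norm w \<le> r0/2" "norm w' \<le> r0/2" for z w w'
  proof -
    have H: "(\<lambda>s. hc z s) holomorphic_on ball 0 r0"
      using holo[of "ball 0 r0" "\<lambda>s. z" "\<lambda>s. s"] that r0 by (auto intro: holomorphic_intros)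
    have Hb: "\<forall>x\<in>ball 0 r0. norm (hc z x) \<le> S" using bnd that r0 by auto
    show ?thesis
    proof (rule field_differentiable_bound[where S="cball 0 (r0/2)" and f'="deriv (\<lambda>s. hc z s)" and f="\<lambda>s. hc z s"])
      show "convex (cball (0::complex) (r0/2))" by (rule convex_cball)
      show "((\<lambda>s. hc z s) has_field_derivative deriv (\<lambda>s. hc z s) u) (at u within cball 0 (r0/2))"
        if "u \<in> cball 0 (r0/2)" for u
      proof -
        have "u \<in> ball 0 r0" using that r0 by auto
        then show ?thesis using holomorphic_derivI[OF H] by (simp add: has_field_derivative_at_within)
      qed
      show "norm (deriv (\<lambda>s. hc z s) u) \<le> L" if "u \<in> cball 0 (r0/2)" for u
      proof -
        have sub: "ball u (r0/2) \<subseteq> ball 0 r0" using that r0 by (auto simp: ball_subset_ball_iff dist_commute)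
        have "norm (deriv (\<lambda>s. hc z s) u) \<le> 2 * S / (r0/2)"
          using cauchy_d1[OF H open_ball sub _ Hb] r0 by simp
        then show ?thesis unfolding L_def by simp
      qed
    qed (use that in auto)
  qed
  have lip: "norm (hc z w - hc z' w') \<le> L * (norm (z-z') + norm (w-w'))"
    if "norm z \<le> r0/2" "norm w \<le> r0/2" "norm z' \<le> r0/2" "norm w' \<le> r0/2" for z w z' w'
  proof -
    have "norm (hc z w - hc z' w') \<le> norm (hc z w - hc z' w) + norm (hc z' w - hc z' w')"
      by (rule order_trans[OF _ norm_triangle_ineq]) simp
    also have "\<dots> \<le> L * norm (z - z') + L * norm (w - w')"
      using lip1[of z w z'] lip2[of z' w w'] that by (intro add_mono) auto
    finally show ?thesis by (simp add: distrib_left)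
  qed
  have real: "hc (of_real x) (of_real y) = of_real (h x y)" if "\<bar>x\<bar> \<le> r0" "\<bar>y\<bar> \<le> r0" for x y
  proof -
    have "((\<lambda>p. of_real (c (fst p) (snd p) * x ^ fst p * y ^ snd p) :: complex) has_sum of_real (h x y)) UNIV"
      using has_sum_of_real[OF hs[OF that]] .
    then have "((\<lambda>p. f p (of_real x) (of_real y)) has_sum of_real (h x y)) UNIV"
      unfolding f_def by simp
    then show ?thesis unfolding hc_def by (rule infsumI)
  qed
  show ?thesis
    apply (rule exI[of _ r0], rule conjI[OF r0])
    apply (rule exI[of _ hc], rule exI[of _ S], rule exI[of _ L])
    using S0 L0 holo bnd lip real by blast
qed

lemma norm_sin_strip: "norm (sin z) \<le> exp \<bar>Im z\<bar>"
proof -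
  have "norm (sin z) = norm (exp(\<i> * z) - exp(-(\<i> * z))) / 2"
    unfolding sin_exp_eq by (simp add: norm_divide norm_mult)
  also have "\<dots> \<le> (norm (exp(\<i> * z)) + norm (exp(-(\<i> * z)))) / 2"
    by (intro divide_right_mono norm_triangle_ineq4) auto
  also have "\<dots> = (exp (- Im z) + exp (Im z)) / 2" by simp
  also have "\<dots> \<le> exp \<bar>Im z\<bar>" by (cases "Im z \<ge> 0") auto
  finally show ?thesis .
qed

lemma norm_sin_strip1: "z \<in> strip 1 \<Longrightarrow> norm (sin z) \<le> exp 1"
  using norm_sin_strip[of z] unfolding strip_def by (smt (verit) exp_le_cancel_iff mem_Collect_eq)

definition Kint :: "real \<Rightarrow> real \<Rightarrow> (complex \<Rightarrow> complex \<Rightarrow> complex) \<Rightarrow> complex \<Rightarrow> complex \<Rightarrow> complex" where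
  "Kint \<kappa> \<sigma> g z w = integral {0..2*pi} (\<lambda>t. of_real (exp (- \<kappa> * t)) * g (z + of_real (\<sigma> * t)) w)"

lemma Kint_cont:
  assumes G: "Good (strip 1) (ball 0 b) g" and z: "z \<in> strip 1" and w: "w \<in> ball 0 b"
  shows "continuous_on {0..2*pi} (\<lambda>t. of_real (exp (- \<kappa> * t)) * g (z + of_real (\<sigma> * t)) w)"
proof -
  have c: "continuous_on (strip 1 \<times> ball 0 b) (\<lambda>p. g (fst p) (snd p))"
    using Good_cont[OF G open_strip open_ball] .
  have sh: "z + of_real (\<sigma> * t) \<in> strip 1" for t using strip_shift[OF z] by blast
  have "continuous_on {0..2*pi} (\<lambda>t. (\<lambda>p. g (fst p) (snd p)) (z + of_real (\<sigma> * t), w))"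
    by (rule continuous_on_compose2[OF c]) (use sh w in \<open>auto intro!: continuous_intros\<close>)
  then show ?thesis by (auto intro!: continuous_intros)
qed

lemma Kint_integrable:
  assumes G: "Good (strip 1) (ball 0 b) g" and z: "z \<in> strip 1" and w: "w \<in> ball 0 b"
  shows "(\<lambda>t. of_real (exp (- \<kappa> * t)) * g (z + of_real (\<sigma> * t)) w) integrable_on {0..2*pi}"
  by (rule integrable_continuous_interval[OF Kint_cont[OF assms]])

lemma Kint_bound:
  assumes G: "Good (strip 1) (ball 0 b) g" and z: "z \<in> strip 1" and w: "w \<in> ball 0 b"
    and M: "\<forall>z\<in>strip 1. \<forall>w\<in>ball 0 b. norm (g z w) \<le> M" and k: "\<kappa> \<ge> 0"
  shows "norm (Kint \<kappa> \<sigma> g z w) \<le> 2 * pi * M"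
proof -
  have M0: "M \<ge> 0" using M z w norm_ge_zero order_trans by blast
  have "norm (Kint \<kappa> \<sigma> g z w) \<le> M * Henstock_Kurzweil_Integration.content (cbox 0 (2*pi))"
  proof (rule has_integral_bound[OF M0])
    show "((\<lambda>t. of_real (exp (- \<kappa> * t)) * g (z + of_real (\<sigma> * t)) w) has_integral Kint \<kappa> \<sigma> g z w) (cbox 0 (2*pi))"
      unfolding Kint_def cbox_interval using Kint_integrable[OF G z w] by (simp add: integrable_integral)
    show "norm (of_real (exp (- \<kappa> * t)) * g (z + of_real (\<sigma> * t)) w) \<le> M" if "t \<in> cbox 0 (2*pi)" for t
    proof -
      have "exp (- \<kappa> * t) \<le> 1" using that k by (auto simp: cbox_interval mult_nonneg_nonneg)
      moreover have "norm (g (z + of_real (\<sigma> * t)) w) \<le> M" using M strip_shift[OF z] w by blast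
      ultimately have "exp (- \<kappa> * t) * norm (g (z + of_real (\<sigma> * t)) w) \<le> 1 * M"
        by (intro mult_mono) auto
      then show ?thesis by (simp add: norm_mult)
    qed
  qed
  then show ?thesis by (simp add: cbox_interval mult.commute)
qed

lemma strip_add_real[simp]: "z + of_real x \<in> strip a \<longleftrightarrow> z \<in> strip a"
  by (simp add: strip_def)

lemma strip_add_real2[simp]: "z + of_real x * of_real y \<in> strip a \<longleftrightarrow> z \<in> strip a"
  by (simp add: strip_def)

lemma Kint_deriv:
  assumes G: "Good (strip 1) (ball 0 b) g" and z: "z \<in> strip 1" and w: "w \<in> ball 0 b"
  shows "((\<lambda>z. Kint \<kappa> \<sigma> g z w) has_field_derivative
           integral {0..2*pi} (\<lambda>t. of_real (exp (- \<kappa> * t)) * Dz g (z + of_real (\<sigma> * t)) w)) (at z)"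
proof -
  define a' where "a' = (\<bar>Im z\<bar> + 1) / 2"
  have a': "a' < 1" "z \<in> strip a'" "0 < a'" using z unfolding a'_def strip_def by auto
  let ?U = "strip a'"
  have sub: "ball x (1 - a') \<subseteq> strip 1" if "x \<in> ?U" for x using ball_strip[OF that] a' by simp
  have GD: "Good ?U (ball 0 b) (Dz g)"
    by (rule Dz_good[OF G open_strip open_ball _ sub]) (use a' in auto)
  have hz: "(\<lambda>s. g s w) holomorphic_on strip 1" using G w unfolding Good_def by blast
  have Ust: "?U \<subseteq> strip 1" using a' unfolding strip_def by auto
  have "((\<lambda>x. integral (cbox 0 (2*pi)) (\<lambda>t. of_real (exp (- \<kappa> * t)) * g (x + of_real (\<sigma> * t)) w))
        has_field_derivative integral (cbox 0 (2*pi)) (\<lambda>t. of_real (exp (- \<kappa> * t)) * Dz g (z + of_real (\<sigma> * t)) w))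
        (at z within ?U)"
  proof (rule leibniz_rule_field_derivative[where fx="\<lambda>x t. of_real (exp (- \<kappa> * t)) * Dz g (x + of_real (\<sigma> * t)) w"])
    fix x t assume x: "x \<in> ?U" and t: "t \<in> cbox 0 (2*pi)"
    have xs: "x + of_real (\<sigma> * t) \<in> strip 1" using strip_shift Ust x by blast
    have "((\<lambda>s. g s w) has_field_derivative Dz g (x + of_real (\<sigma> * t)) w) (at (x + of_real (\<sigma> * t)))"
      unfolding Dz_def using holomorphic_derivI[OF hz open_strip xs] .
    then have "((\<lambda>x. g (x + of_real (\<sigma> * t)) w) has_field_derivative Dz g (x + of_real (\<sigma> * t)) w) (at x)"
      by (simp add: DERIV_shift)
    then have "((\<lambda>x. of_real (exp (- \<kappa> * t)) * g (x + of_real (\<sigma> * t)) w) has_field_derivative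
                of_real (exp (- \<kappa> * t)) * Dz g (x + of_real (\<sigma> * t)) w) (at x)"
      by (rule DERIV_cmult)
    then show "((\<lambda>x. of_real (exp (- \<kappa> * t)) * g (x + of_real (\<sigma> * t)) w) has_field_derivative
                of_real (exp (- \<kappa> * t)) * Dz g (x + of_real (\<sigma> * t)) w) (at x within ?U)"
      by (rule has_field_derivative_at_within)
  next
    fix x assume x: "x \<in> ?U"
    then show "(\<lambda>t. of_real (exp (- \<kappa> * t)) * g (x + of_real (\<sigma> * t)) w) integrable_on cbox 0 (2*pi)"
      unfolding cbox_interval using Kint_integrable[OF G _ w] Ust by blast
  next
    have c: "continuous_on (?U \<times> ball 0 b) (\<lambda>p. Dz g (fst p) (snd p))"
      using Good_cont[OF GD open_strip open_ball] .
    have "continuous_on (?U \<times> cbox 0 (2*pi)) (\<lambda>p. (\<lambda>p. Dz g (fst p) (snd p)) (fst p + of_real (\<sigma> * snd p), w))"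
      by (rule continuous_on_compose2[OF c]) (use w strip_shift in \<open>auto intro!: continuous_intros\<close>)
    then show "continuous_on (?U \<times> cbox 0 (2*pi)) (\<lambda>(x, t). of_real (exp (- \<kappa> * t)) * Dz g (x + of_real (\<sigma> * t)) w)"
      by (auto simp: case_prod_unfold intro!: continuous_intros)
  next
    show "z \<in> ?U" "convex ?U" using a' convex_strip by auto
  qed
  then show ?thesis unfolding Kint_def cbox_interval using at_within_open[OF a'(2) open_strip] by simp
qed

lemma Kint_dw:
  assumes G: "Good (strip 1) (ball 0 b) g" and z: "z \<in> strip 1" and w: "w \<in> ball 0 b"
  shows "(\<lambda>w. Kint \<kappa> \<sigma> g z w) field_differentiable (at w)"
proof -
  define b' where "b' = (norm w + b) / 2"
  have b': "b' < b" "w \<in> ball 0 b'" using w unfolding b'_def by auto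
  let ?U = "ball (0::complex) b'"
  have sub: "ball x (b - b') \<subseteq> ball 0 b" if "x \<in> ?U" for x
    using that by (auto simp: ball_subset_ball_iff dist_commute)
  have GD: "Good (strip 1) ?U (Dw g)"
    by (rule Dw_good[OF G open_strip open_ball _ sub]) (use b' in auto)
  have hw: "(\<lambda>s. g z' s) holomorphic_on ball 0 b" if "z' \<in> strip 1" for z' using G that unfolding Good_def by blast
  have Ub: "?U \<subseteq> ball 0 b" using b' by auto
  have "((\<lambda>x. integral (cbox 0 (2*pi)) (\<lambda>t. of_real (exp (- \<kappa> * t)) * g (z + of_real (\<sigma> * t)) x))
        has_field_derivative integral (cbox 0 (2*pi)) (\<lambda>t. of_real (exp (- \<kappa> * t)) * Dw g (z + of_real (\<sigma> * t)) w))
        (at w within ?U)"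
  proof (rule leibniz_rule_field_derivative[where fx="\<lambda>x t. of_real (exp (- \<kappa> * t)) * Dw g (z + of_real (\<sigma> * t)) x"])
    fix x t assume x: "x \<in> ?U" and t: "t \<in> cbox 0 (2*pi)"
    have zs: "z + of_real (\<sigma> * t) \<in> strip 1" using strip_shift z by blast
    have xb: "x \<in> ball 0 b" using x Ub by blast
    have "((\<lambda>s. g (z + of_real (\<sigma> * t)) s) has_field_derivative Dw g (z + of_real (\<sigma> * t)) x) (at x)"
      unfolding Dw_def using holomorphic_derivI[OF hw[OF zs] open_ball xb] .
    then have "((\<lambda>x. of_real (exp (- \<kappa> * t)) * g (z + of_real (\<sigma> * t)) x) has_field_derivative
                of_real (exp (- \<kappa> * t)) * Dw g (z + of_real (\<sigma> * t)) x) (at x)"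
      by (rule DERIV_cmult)
    then show "((\<lambda>x. of_real (exp (- \<kappa> * t)) * g (z + of_real (\<sigma> * t)) x) has_field_derivative
                of_real (exp (- \<kappa> * t)) * Dw g (z + of_real (\<sigma> * t)) x) (at x within ?U)"
      by (rule has_field_derivative_at_within)
  next
    fix x assume x: "x \<in> ?U"
    then show "(\<lambda>t. of_real (exp (- \<kappa> * t)) * g (z + of_real (\<sigma> * t)) x) integrable_on cbox 0 (2*pi)"
      unfolding cbox_interval using Kint_integrable[OF G z] Ub by blast
  next
    have c: "continuous_on (strip 1 \<times> ?U) (\<lambda>p. Dw g (fst p) (snd p))"
      using Good_cont[OF GD open_strip open_ball] .
    have "continuous_on (?U \<times> cbox 0 (2*pi)) (\<lambda>p. (\<lambda>p. Dw g (fst p) (snd p)) (z + of_real (\<sigma> * snd p), fst p))"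
      by (rule continuous_on_compose2[OF c]) (use z strip_shift in \<open>auto intro!: continuous_intros\<close>)
    then show "continuous_on (?U \<times> cbox 0 (2*pi)) (\<lambda>(x, t). of_real (exp (- \<kappa> * t)) * Dw g (z + of_real (\<sigma> * t)) x)"
      by (auto simp: case_prod_unfold intro!: continuous_intros)
  next
    show "w \<in> ?U" "convex ?U" using b' by auto
  qed
  then show ?thesis unfolding Kint_def cbox_interval field_differentiable_def
    using at_within_open[OF b'(2) open_ball] by auto
qed

lemma Kint_good:
  assumes G: "Good (strip 1) (ball 0 b) g" and k: "\<kappa> \<ge> 0"
  shows "Good (strip 1) (ball 0 b) (Kint \<kappa> \<sigma> g)"
proof -
  obtain M where M: "\<forall>z\<in>strip 1. \<forall>w\<in>ball 0 b. norm (g z w) \<le> M" using G unfolding Good_def by blast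
  have 1: "(\<lambda>z. Kint \<kappa> \<sigma> g z w) holomorphic_on strip 1" if "w \<in> ball 0 b" for w
    using Kint_deriv[OF G _ that] by (intro holo_local open_strip) (auto simp: field_differentiable_def)
  have 2: "(\<lambda>w. Kint \<kappa> \<sigma> g z w) holomorphic_on ball 0 b" if "z \<in> strip 1" for z
    using Kint_dw[OF G that] by (intro holo_local open_ball) auto
  have 3: "\<forall>z\<in>strip 1. \<forall>w\<in>ball 0 b. norm (Kint \<kappa> \<sigma> g z w) \<le> 2 * pi * M"
    using Kint_bound[OF G _ _ M k] by blast
  show ?thesis unfolding Good_def using 1 2 3 by blast
qed

lemma Kint_ftc:
  assumes G: "Good (strip 1) (ball 0 b) g" and per: "\<forall>z w. g (z + of_real (2*pi)) w = g z w"
    and z: "z \<in> strip 1" and w: "w \<in> ball 0 b" and s: "\<sigma> = 1 \<or> \<sigma> = -1"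
  shows "integral {0..2*pi} (\<lambda>t. of_real (exp (- \<kappa> * t)) * Dz g (z + of_real (\<sigma> * t)) w)
       = of_real \<sigma> * ((of_real (exp (- \<kappa> * (2*pi))) - 1) * g z w + of_real \<kappa> * Kint \<kappa> \<sigma> g z w)"
proof -
  define E where "E t = (of_real (exp (- \<kappa> * t)) :: complex)" for t
  define A where "A t = E t * Dz g (z + of_real (\<sigma> * t)) w" for t
  define B where "B t = E t * g (z + of_real (\<sigma> * t)) w" for t
  have hz: "(\<lambda>s. g s w) holomorphic_on strip 1" using G w unfolding Good_def by blast
  have dq: "(B has_vector_derivative (of_real \<sigma> * A t - of_real \<kappa> * B t)) (at t within {0..2*pi})" for t
  proof -
    have dE0: "((\<lambda>t. exp (- \<kappa> * t)) has_real_derivative (exp (- \<kappa> * t) * (- \<kappa>))) (at t within {0..2*pi})"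
      by (auto intro!: derivative_eq_intros)
    have dE: "(E has_vector_derivative of_real (exp (- \<kappa> * t) * (- \<kappa>))) (at t within {0..2*pi})"
      unfolding E_def by (rule has_vector_derivative_of_real[OF dE0])
    have ps: "z + of_real \<sigma> * of_real t \<in> strip 1" using z by simp
    have h1: "((\<lambda>s. g s w) has_field_derivative Dz g (z + of_real \<sigma> * of_real t) w) (at (z + of_real \<sigma> * of_real t))"
      unfolding Dz_def using holomorphic_derivI[OF hz open_strip ps] .
    have h2: "((\<lambda>s. z + of_real \<sigma> * s) has_field_derivative of_real \<sigma>) (at (of_real t))"
      by (auto intro!: derivative_eq_intros)
    have "((\<lambda>s. g (z + of_real \<sigma> * s) w) has_field_derivative Dz g (z + of_real \<sigma> * of_real t) w * of_real \<sigma>) (at (of_real t))"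
      using DERIV_chain2[of "\<lambda>s. g s w", OF h1 h2] by simp
    then have dg: "((\<lambda>x. g (z + of_real (\<sigma> * x)) w) has_vector_derivative Dz g (z + of_real (\<sigma> * t)) w * of_real \<sigma>)
        (at t within {0..2*pi})"
      using has_vector_derivative_real_field by (simp add: of_real_mult)
    have "(B has_vector_derivative (E t * (Dz g (z + of_real (\<sigma> * t)) w * of_real \<sigma>)
            + of_real (exp (- \<kappa> * t) * (- \<kappa>)) * g (z + of_real (\<sigma> * t)) w)) (at t within {0..2*pi})"
      unfolding B_def by (rule has_vector_derivative_mult[OF dE dg])
    moreover have "E t * (Dz g (z + of_real (\<sigma> * t)) w * of_real \<sigma>)
            + of_real (exp (- \<kappa> * t) * (- \<kappa>)) * g (z + of_real (\<sigma> * t)) w = of_real \<sigma> * A t - of_real \<kappa> * B t"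
      unfolding A_def B_def E_def by (simp add: algebra_simps)
    ultimately show ?thesis by simp
  qed
  have ftc: "((\<lambda>t. of_real \<sigma> * A t - of_real \<kappa> * B t) has_integral (B (2*pi) - B 0)) {0..2*pi}"
    by (rule fundamental_theorem_of_calculus) (use dq in auto)
  have Bi: "(B has_integral Kint \<kappa> \<sigma> g z w) {0..2*pi}"
    unfolding B_def E_def Kint_def using Kint_integrable[OF G z w] by (simp add: integrable_integral)
  have "((\<lambda>t. (of_real \<sigma> * A t - of_real \<kappa> * B t) + of_real \<kappa> * B t) has_integral
          ((B (2*pi) - B 0) + of_real \<kappa> * Kint \<kappa> \<sigma> g z w)) {0..2*pi}"
    by (rule has_integral_add[OF ftc has_integral_mult_right[OF Bi]])
  then have "((\<lambda>t. of_real \<sigma> * (of_real \<sigma> * A t)) has_integral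
          of_real \<sigma> * ((B (2*pi) - B 0) + of_real \<kappa> * Kint \<kappa> \<sigma> g z w)) {0..2*pi}"
    by (intro has_integral_mult_right) simp
  moreover have "of_real \<sigma> * (of_real \<sigma> * A t) = A t" for t
    using s by auto
  ultimately have Ai: "(A has_integral of_real \<sigma> * ((B (2*pi) - B 0) + of_real \<kappa> * Kint \<kappa> \<sigma> g z w)) {0..2*pi}"
    by simp
  have "g (z + of_real (\<sigma> * (2*pi))) w = g z w"
    using s
  proof
    assume "\<sigma> = 1" then show ?thesis using per by simp
  next
    assume "\<sigma> = -1"
    then show ?thesis using per[rule_format, of "z - of_real (2*pi)" w] by simp
  qed
  then have "B (2*pi) - B 0 = (of_real (exp (- \<kappa> * (2*pi))) - 1) * g z w"
    unfolding B_def E_def by (simp add: algebra_simps)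
  then show ?thesis using integral_unique[OF Ai] unfolding A_def E_def by simp
qed

lemma Good_cmult: "Good A B F \<Longrightarrow> Good A B (\<lambda>z w. c * F z w)"
proof -
  assume G: "Good A B F"
  then obtain M where M: "\<forall>z\<in>A. \<forall>w\<in>B. norm (F z w) \<le> M" unfolding Good_def by blast
  have "\<forall>z\<in>A. \<forall>w\<in>B. norm (c * F z w) \<le> norm c * M"
    using M by (simp add: norm_mult mult_left_mono)
  then show ?thesis using G unfolding Good_def by (auto intro!: holomorphic_intros)
qed

lemma Good_diff: "Good A B F \<Longrightarrow> Good A B G \<Longrightarrow> Good A B (\<lambda>z w. F z w - G z w)"
proof -
  assume F: "Good A B F" and G: "Good A B G"
  obtain M where M: "\<forall>z\<in>A. \<forall>w\<in>B. norm (F z w) \<le> M" using F unfolding Good_def by blast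
  obtain N where N: "\<forall>z\<in>A. \<forall>w\<in>B. norm (G z w) \<le> N" using G unfolding Good_def by blast
  have "\<forall>z\<in>A. \<forall>w\<in>B. norm (F z w - G z w) \<le> M + N"
    using M N by (meson add_mono norm_triangle_ineq4 order_trans)
  then show ?thesis using F G unfolding Good_def by (auto intro!: holomorphic_intros)
qed

lemma Kint_diff:
  assumes "Good (strip 1) (ball 0 b) g" "Good (strip 1) (ball 0 b) g'" "z \<in> strip 1" "w \<in> ball 0 b"
  shows "Kint \<kappa> \<sigma> g z w - Kint \<kappa> \<sigma> g' z w = Kint \<kappa> \<sigma> (\<lambda>z w. g z w - g' z w) z w"
proof -
  note i1 = Kint_integrable[OF assms(1,3,4), of \<kappa> \<sigma>]
  note i2 = Kint_integrable[OF assms(2,3,4), of \<kappa> \<sigma>]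
  show ?thesis unfolding Kint_def integral_diff[OF i1 i2, symmetric] by (simp add: algebra_simps)
qed

lemma Kint_per:
  assumes "\<forall>z w. g (z + of_real (2*pi)) w = g z w"
  shows "Kint \<kappa> \<sigma> g (z + of_real (2*pi)) w = Kint \<kappa> \<sigma> g z w"
proof -
  have "g (z + of_real (2*pi) + of_real (\<sigma> * t)) w = g (z + of_real (\<sigma> * t)) w" for t
    using assms[rule_format, of "z + of_real (\<sigma> * t)" w] by (simp add: algebra_simps)
  then show ?thesis unfolding Kint_def by simp
qed

lemma Kint_real:
  assumes G: "Good (strip 1) (ball 0 b) g" and w: "(of_real y :: complex) \<in> ball 0 b"
    and r: "\<And>x. g (of_real x) (of_real y) \<in> \<real>"
  shows "Kint \<kappa> \<sigma> g (of_real x) (of_real y) \<in> \<real>"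
proof -
  let ?f = "\<lambda>t. of_real (exp (- \<kappa> * t)) * g (of_real x + of_real (\<sigma> * t)) (of_real y)"
  have "(?f has_integral Kint \<kappa> \<sigma> g (of_real x) (of_real y)) {0..2*pi}"
    unfolding Kint_def using Kint_integrable[OF G real_in_strip[of 1 x] w] by (simp add: integrable_integral)
  then have "((Im \<circ> ?f) has_integral Im (Kint \<kappa> \<sigma> g (of_real x) (of_real y))) {0..2*pi}"
    by (rule has_integral_linear) (rule bounded_linear_Im)
  moreover have "(Im \<circ> ?f) = (\<lambda>t. 0)"
  proof
    fix t
    have "g (of_real (x + \<sigma> * t)) (of_real y) \<in> \<real>" by (rule r)
    then have "?f t \<in> \<real>" by (simp add: of_real_add)
    then show "(Im \<circ> ?f) t = 0" by (simp add: complex_is_Real_iff)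
  qed
  ultimately have "Im (Kint \<kappa> \<sigma> g (of_real x) (of_real y)) = 0"
    using has_integral_0 has_integral_unique by metis
  then show ?thesis by (simp add: complex_is_Real_iff)
qed

locale sys =
  fixes \<alpha> \<beta> \<omega> \<rho> :: real and h1c h2c Hc :: "complex \<Rightarrow> complex \<Rightarrow> complex" and r0 S L :: real
  assumes \<alpha>: "\<alpha> > 0" and \<beta>: "\<beta> > 0" and \<omega>: "\<omega> > 0" and r0: "r0 > 0" and S0: "S \<ge> 0" and L0: "L \<ge> 0"
  and hol: "\<And>hc X A B. hc \<in> {h1c, h2c, Hc} \<Longrightarrow> open X \<Longrightarrow> A holomorphic_on X \<Longrightarrow> B holomorphic_on X \<Longrightarrow>
       (\<forall>s\<in>X. norm (A s) \<le> r0 \<and> norm (B s) \<le> r0) \<Longrightarrow> (\<lambda>s. hc (A s) (B s)) holomorphic_on X"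
  and bnd: "\<And>hc z w. hc \<in> {h1c, h2c, Hc} \<Longrightarrow> norm z \<le> r0 \<Longrightarrow> norm w \<le> r0 \<Longrightarrow> norm (hc z w) \<le> S"
  and lip: "\<And>hc z w z' w'. hc \<in> {h1c, h2c, Hc} \<Longrightarrow> norm z \<le> r0/2 \<Longrightarrow> norm w \<le> r0/2 \<Longrightarrow>
       norm z' \<le> r0/2 \<Longrightarrow> norm w' \<le> r0/2 \<Longrightarrow> norm (hc z w - hc z' w') \<le> L * (norm (z-z') + norm (w-w'))"
  and rl: "\<And>hc x y. hc \<in> {h1c, h2c, Hc} \<Longrightarrow> \<bar>x\<bar> \<le> r0 \<Longrightarrow> \<bar>y\<bar> \<le> r0 \<Longrightarrow> hc (of_real x) (of_real y) \<in> \<real>"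
begin

definition "ka = \<alpha> / \<omega>"
definition "kb = \<beta> / \<omega>"
definition "ca = 1 / (1 - exp (- ka * (2*pi)))"
definition "cb = 1 / (1 - exp (- kb * (2*pi)))"
definition "cm = max ca cb"
definition "BG = (1 + S) * (\<bar>\<rho>\<bar> * S + exp 1) / \<omega>"
definition "R = 2 * pi * cm * BG + 1"
definition "Lam = (L * (\<bar>\<rho>\<bar> * S + exp 1) + (1 + S) * \<bar>\<rho>\<bar> * L) / \<omega>"
definition "bm = min (r0 / (2 * R)) (1 / (8 * pi * cm * Lam + 1))"

definition Phi :: "(complex \<Rightarrow> complex \<Rightarrow> complex) \<Rightarrow> real \<Rightarrow> complex \<Rightarrow> complex \<Rightarrow> complex \<Rightarrow> complex" where
  "Phi hc sg z p q = of_real sg * (1 + hc p q) * (of_real \<rho> * Hc p q + sin z) / of_real \<omega>"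

definition gg :: "(complex \<Rightarrow> complex \<Rightarrow> complex) \<Rightarrow> real \<Rightarrow> (complex \<Rightarrow> complex \<Rightarrow> complex) \<Rightarrow> (complex \<Rightarrow> complex \<Rightarrow> complex)
    \<Rightarrow> complex \<Rightarrow> complex \<Rightarrow> complex" where
  "gg hc sg U1 U2 z w = Phi hc sg z (w * U1 z w) (w * U2 z w)"

definition "T1 U1 U2 = (\<lambda>z w. of_real ca * Kint ka (-1) (gg h1c (-1) U1 U2) z w)"
definition "T2 U1 U2 = (\<lambda>z w. - of_real cb * Kint kb 1 (gg h2c 1 U1 U2) z w)"

definition Inv :: "(complex \<Rightarrow> complex \<Rightarrow> complex) \<Rightarrow> bool" where
  "Inv U \<longleftrightarrow> Good (strip 1) (ball 0 bm) U \<and> (\<forall>z\<in>strip 1. \<forall>w\<in>ball 0 bm. norm (U z w) \<le> R)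
     \<and> (\<forall>z w. U (z + of_real (2*pi)) w = U z w) \<and> (\<forall>x y. \<bar>y\<bar> < bm \<longrightarrow> U (of_real x) (of_real y) \<in> \<real>)"

lemma ka: "ka > 0" and kb: "kb > 0" unfolding ka_def kb_def using \<alpha> \<beta> \<omega> by auto

lemma c_pos: "k > 0 \<Longrightarrow> 1 / (1 - exp (- k * (2*pi))) > 0"
proof -
  assume "k > 0"
  then have "exp (- k * (2*pi)) < 1" by simp
  then show ?thesis by simp
qed

lemma ca: "ca > 0" and cb: "cb > 0" unfolding ca_def cb_def using c_pos ka kb by auto

lemma cm: "cm > 0" "ca \<le> cm" "cb \<le> cm" unfolding cm_def using ca cb by auto

lemma BG: "BG \<ge> 0" unfolding BG_def using S0 \<omega> by (auto intro!: divide_nonneg_pos mult_nonneg_nonneg add_nonneg_nonneg)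

lemma R: "R \<ge> 1" "R > 0"
proof -
  have h: "0 \<le> 2*pi*cm*BG" using cm(1) BG by (intro mult_nonneg_nonneg) auto
  then show "R \<ge> 1" "R > 0" unfolding R_def by linarith+
qed

lemma Lam: "Lam \<ge> 0" unfolding Lam_def using S0 L0 \<omega> by (auto intro!: divide_nonneg_pos mult_nonneg_nonneg add_nonneg_nonneg)

lemma bm: "bm > 0" "bm * R \<le> r0 / 2" "4 * pi * cm * Lam * bm \<le> 1/2"
proof -
  have "0 \<le> 8 * pi * cm * Lam" using cm(1) Lam by (intro mult_nonneg_nonneg) auto
  then have X: "8 * pi * cm * Lam + 1 > 0" by simp
  show "bm > 0" unfolding bm_def using r0 R X by auto
  have "bm \<le> r0 / (2 * R)" unfolding bm_def by simp
  then have "bm * R \<le> r0 / (2 * R) * R" by (rule mult_right_mono) (use R in auto)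
  also have "r0 / (2 * R) * R = r0 / 2" using R(2) by (simp add: field_simps)
  finally show "bm * R \<le> r0 / 2" .
  have b2: "bm \<le> 1 / (8 * pi * cm * Lam + 1)" unfolding bm_def by simp
  have X0: "4 * pi * cm * Lam \<ge> 0" using cm(1) Lam by (intro mult_nonneg_nonneg) auto
  have "4 * pi * cm * Lam * bm \<le> 4 * pi * cm * Lam * (1 / (8 * pi * cm * Lam + 1))"
    by (rule mult_left_mono) (use b2 X0 in auto)
  also have "\<dots> \<le> 1/2" using X X0 by (simp add: field_simps)
  finally show "4 * pi * cm * Lam * bm \<le> 1/2" .
qed

lemma Phi_holo:
  assumes hc: "hc \<in> {h1c, h2c}" and X: "open X" and A: "A holomorphic_on X" and B: "B holomorphic_on X"
    and C: "C holomorphic_on X" and AB: "\<forall>s\<in>X. norm (A s) \<le> r0 \<and> norm (B s) \<le> r0"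
  shows "(\<lambda>s. Phi hc sg (C s) (A s) (B s)) holomorphic_on X"
proof -
  have 1: "(\<lambda>s. hc (A s) (B s)) holomorphic_on X" using hol[OF _ X A B AB] hc by blast
  have 2: "(\<lambda>s. Hc (A s) (B s)) holomorphic_on X" using hol[OF _ X A B AB] by blast
  show ?thesis unfolding Phi_def using 1 2 C \<omega> by (intro holomorphic_intros) auto
qed

lemma Phi_bound:
  assumes hc: "hc \<in> {h1c, h2c}" and sg: "\<bar>sg\<bar> = 1" and z: "z \<in> strip 1"
    and p: "norm p \<le> r0" and q: "norm q \<le> r0"
  shows "norm (Phi hc sg z p q) \<le> BG"
proof -
  have 1: "norm (1 + hc p q) \<le> 1 + S" using bnd[of hc p q] hc p q norm_triangle_ineq[of 1 "hc p q"] by auto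
  have "norm (of_real \<rho> * Hc p q + sin z) \<le> \<bar>\<rho>\<bar> * norm (Hc p q) + norm (sin z)"
    by (rule order_trans[OF norm_triangle_ineq]) (simp add: norm_mult)
  also have "\<dots> \<le> \<bar>\<rho>\<bar> * S + exp 1"
    using bnd[of Hc p q] p q norm_sin_strip1[OF z] by (intro add_mono mult_left_mono) auto
  finally have 2: "norm (of_real \<rho> * Hc p q + sin z) \<le> \<bar>\<rho>\<bar> * S + exp 1" .
  have "norm (Phi hc sg z p q) = norm (1 + hc p q) * norm (of_real \<rho> * Hc p q + sin z) / \<omega>"
    unfolding Phi_def using sg \<omega> by (simp add: norm_mult norm_divide)
  also have "\<dots> \<le> (1 + S) * (\<bar>\<rho>\<bar> * S + exp 1) / \<omega>"
    using 1 2 \<omega> S0 by (intro divide_right_mono mult_mono) auto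
  finally show ?thesis unfolding BG_def .
qed

lemma Phi_lip:
  assumes hc: "hc \<in> {h1c, h2c}" and sg: "\<bar>sg\<bar> = 1" and z: "z \<in> strip 1"
    and p: "norm p \<le> r0/2" and q: "norm q \<le> r0/2" and p': "norm p' \<le> r0/2" and q': "norm q' \<le> r0/2"
  shows "norm (Phi hc sg z p q - Phi hc sg z p' q') \<le> Lam * (norm (p - p') + norm (q - q'))"
proof -
  define d where "d = norm (p - p') + norm (q - q')"
  have d0: "d \<ge> 0" unfolding d_def by simp
  have r2: "r0/2 \<le> r0" using r0 by simp
  let ?a = "hc p q" and ?a' = "hc p' q'" and ?b = "Hc p q" and ?b' = "Hc p' q'"
  have ea: "norm (?a - ?a') \<le> L * d" unfolding d_def using lip[of hc p q p' q'] hc p q p' q' by auto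
  have eb: "norm (?b - ?b') \<le> L * d" unfolding d_def using lip[of Hc p q p' q'] p q p' q' by auto
  have na': "norm (1 + ?a') \<le> 1 + S" using bnd[of hc p' q'] hc p' q' r2 norm_triangle_ineq[of 1 ?a'] by auto
  have nb: "norm (of_real \<rho> * ?b + sin z) \<le> \<bar>\<rho>\<bar> * S + exp 1"
  proof -
    have "norm (of_real \<rho> * ?b + sin z) \<le> \<bar>\<rho>\<bar> * norm ?b + norm (sin z)"
      by (rule order_trans[OF norm_triangle_ineq]) (simp add: norm_mult)
    also have "\<dots> \<le> \<bar>\<rho>\<bar> * S + exp 1"
      using bnd[of Hc p q] p q r2 norm_sin_strip1[OF z] by (intro add_mono mult_left_mono) auto
    finally show ?thesis .
  qed
  have eq: "(1 + ?a) * (of_real \<rho> * ?b + sin z) - (1 + ?a') * (of_real \<rho> * ?b' + sin z)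
      = (?a - ?a') * (of_real \<rho> * ?b + sin z) + (1 + ?a') * (of_real \<rho> * (?b - ?b'))"
    by (simp add: algebra_simps)
  have "norm ((1 + ?a) * (of_real \<rho> * ?b + sin z) - (1 + ?a') * (of_real \<rho> * ?b' + sin z))
      \<le> norm (?a - ?a') * norm (of_real \<rho> * ?b + sin z) + norm (1 + ?a') * (\<bar>\<rho>\<bar> * norm (?b - ?b'))"
    unfolding eq by (rule order_trans[OF norm_triangle_ineq]) (simp add: norm_mult)
  also have "\<dots> \<le> (L * d) * (\<bar>\<rho>\<bar> * S + exp 1) + (1 + S) * (\<bar>\<rho>\<bar> * (L * d))"
    using ea eb na' nb S0 L0 d0 by (intro add_mono mult_mono mult_left_mono) auto
  also have "\<dots> = Lam * \<omega> * d"
  proof -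
    have "\<omega> \<noteq> 0" using \<omega> by simp
    then show ?thesis unfolding Lam_def by (simp add: field_simps)
  qed
  finally have main: "norm ((1 + ?a) * (of_real \<rho> * ?b + sin z) - (1 + ?a') * (of_real \<rho> * ?b' + sin z)) \<le> Lam * \<omega> * d" .
  have "Phi hc sg z p q - Phi hc sg z p' q'
     = of_real sg * ((1 + ?a) * (of_real \<rho> * ?b + sin z) - (1 + ?a') * (of_real \<rho> * ?b' + sin z)) / of_real \<omega>"
    unfolding Phi_def mult.assoc[of "of_real sg"] by (simp only: right_diff_distrib diff_divide_distrib)
  then have "norm (Phi hc sg z p q - Phi hc sg z p' q')
      = norm ((1 + ?a) * (of_real \<rho> * ?b + sin z) - (1 + ?a') * (of_real \<rho> * ?b' + sin z)) / \<omega>"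
    using sg \<omega> by (simp add: norm_mult norm_divide)
  also have "\<dots> \<le> Lam * \<omega> * d / \<omega>" by (rule divide_right_mono[OF main]) (use \<omega> in simp)
  also have "\<dots> = Lam * d" using \<omega> by simp
  finally show ?thesis unfolding d_def .
qed

lemma Phi_real:
  assumes hc: "hc \<in> {h1c, h2c}" and "\<bar>x\<bar> \<le> r0" "\<bar>y\<bar> \<le> r0"
  shows "Phi hc sg (of_real t) (of_real x) (of_real y) \<in> \<real>"
proof -
  have "hc (of_real x) (of_real y) \<in> \<real>" "Hc (of_real x) (of_real y) \<in> \<real>" using rl assms by auto
  moreover have "sin (of_real t :: complex) \<in> \<real>" by (simp add: sin_of_real)
  ultimately show ?thesis unfolding Phi_def by (auto intro!: Reals_mult Reals_add Reals_divide)
qed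

end

lemma sin_per: "sin (z + of_real (2*pi)) = sin (z::complex)"
  by (simp add: sin_add flip: sin_of_real cos_of_real)

lemma sin_per': "sin (z + 2 * of_real pi) = sin (z::complex)"
  using sin_per[of z] by simp

context sys begin

lemma small:
  assumes "Inv U" "z \<in> strip 1" "w \<in> ball 0 bm"
  shows "norm (w * U z w) \<le> r0/2"
proof -
  have "norm (U z w) \<le> R" using assms unfolding Inv_def by blast
  moreover have "norm w \<le> bm" using assms(3) by simp
  ultimately have "norm w * norm (U z w) \<le> bm * R" by (intro mult_mono) (use bm in auto)
  then show ?thesis using bm by (simp add: norm_mult)
qed

lemma gg_props:
  assumes U1: "Inv U1" and U2: "Inv U2" and hc: "hc \<in> {h1c, h2c}" and sg: "\<bar>sg\<bar> = 1"
  shows "Good (strip 1) (ball 0 bm) (gg hc sg U1 U2)"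
   and "\<forall>z\<in>strip 1. \<forall>w\<in>ball 0 bm. norm (gg hc sg U1 U2 z w) \<le> BG"
   and "\<forall>z w. gg hc sg U1 U2 (z + of_real (2*pi)) w = gg hc sg U1 U2 z w"
   and "\<forall>x y. \<bar>y\<bar> < bm \<longrightarrow> gg hc sg U1 U2 (of_real x) (of_real y) \<in> \<real>"
proof -
  have r2: "r0/2 \<le> r0" using r0 by simp
  have G1: "Good (strip 1) (ball 0 bm) U1" and G2: "Good (strip 1) (ball 0 bm) U2"
    using U1 U2 unfolding Inv_def by auto
  show B: "\<forall>z\<in>strip 1. \<forall>w\<in>ball 0 bm. norm (gg hc sg U1 U2 z w) \<le> BG"
    unfolding gg_def using Phi_bound[OF hc sg] small[OF U1] small[OF U2] r2 by (meson order_trans)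
  have hz: "(\<lambda>z. gg hc sg U1 U2 z w) holomorphic_on strip 1" if w: "w \<in> ball 0 bm" for w
  proof -
    have "(\<lambda>s. Phi hc sg s (w * U1 s w) (w * U2 s w)) holomorphic_on strip 1"
    proof (rule Phi_holo[OF hc open_strip])
      show "(\<lambda>s. w * U1 s w) holomorphic_on strip 1" "(\<lambda>s. w * U2 s w) holomorphic_on strip 1"
        using G1 G2 w unfolding Good_def by (auto intro!: holomorphic_intros)
      show "(\<lambda>s. s) holomorphic_on strip 1" by (rule holomorphic_intros)
      show "\<forall>s\<in>strip 1. norm (w * U1 s w) \<le> r0 \<and> norm (w * U2 s w) \<le> r0"
        using small[OF U1 _ w] small[OF U2 _ w] r2 by (meson order_trans)
    qed
    then show ?thesis unfolding gg_def .
  qed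
  have hw: "(\<lambda>w. gg hc sg U1 U2 z w) holomorphic_on ball 0 bm" if z: "z \<in> strip 1" for z
  proof -
    have "(\<lambda>s. Phi hc sg z (s * U1 z s) (s * U2 z s)) holomorphic_on ball 0 bm"
    proof (rule Phi_holo[OF hc open_ball])
      show "(\<lambda>s. s * U1 z s) holomorphic_on ball 0 bm" "(\<lambda>s. s * U2 z s) holomorphic_on ball 0 bm"
        using G1 G2 z unfolding Good_def by (auto intro!: holomorphic_intros)
      show "(\<lambda>s. z) holomorphic_on ball 0 bm" by (rule holomorphic_intros)
      show "\<forall>s\<in>ball 0 bm. norm (s * U1 z s) \<le> r0 \<and> norm (s * U2 z s) \<le> r0"
        using small[OF U1 z] small[OF U2 z] r2 by (meson order_trans)
    qed
    then show ?thesis unfolding gg_def .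
  qed
  show "Good (strip 1) (ball 0 bm) (gg hc sg U1 U2)" unfolding Good_def using hz hw B by blast
  show "\<forall>z w. gg hc sg U1 U2 (z + of_real (2*pi)) w = gg hc sg U1 U2 z w"
    using U1 U2 unfolding Inv_def gg_def Phi_def by (simp add: sin_per')
  show "\<forall>x y. \<bar>y\<bar> < bm \<longrightarrow> gg hc sg U1 U2 (of_real x) (of_real y) \<in> \<real>"
  proof (intro allI impI)
    fix x y :: real assume y: "\<bar>y\<bar> < bm"
    have yb: "(of_real y :: complex) \<in> ball 0 bm" using y by simp
    have xs: "(of_real x :: complex) \<in> strip 1" by (simp add: real_in_strip)
    define p where "p = of_real y * U1 (of_real x) (of_real y)"
    define q where "q = of_real y * U2 (of_real x) (of_real y)"
    have pR: "p \<in> \<real>" "q \<in> \<real>" unfolding p_def q_def using U1 U2 y unfolding Inv_def by auto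
    have pn: "norm p \<le> r0/2" "norm q \<le> r0/2" unfolding p_def q_def using small[OF U1 xs yb] small[OF U2 xs yb] by auto
    have pe: "p = of_real (Re p)" "q = of_real (Re q)" using pR by (auto simp: of_real_Re)
    have "\<bar>Re p\<bar> \<le> r0" "\<bar>Re q\<bar> \<le> r0" using pn abs_Re_le_cmod[of p] abs_Re_le_cmod[of q] r2 by auto
    then have "Phi hc sg (of_real x) (of_real (Re p)) (of_real (Re q)) \<in> \<real>" by (rule Phi_real[OF hc])
    then have "Phi hc sg (of_real x) p q \<in> \<real>" by (simp only: pe[symmetric])
    then show "gg hc sg U1 U2 (of_real x) (of_real y) \<in> \<real>" unfolding gg_def p_def q_def .
  qed
qed

lemma T_Inv:
  assumes U1: "Inv U1" and U2: "Inv U2"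
  shows "Inv (T1 U1 U2)" "Inv (T2 U1 U2)"
proof -
  have s1: "\<bar>-1::real\<bar> = 1" "\<bar>1::real\<bar> = 1" by auto
  have hh: "h1c \<in> {h1c, h2c}" "h2c \<in> {h1c, h2c}" by auto
  note g1 = gg_props[OF U1 U2 hh(1) s1(1)]
  note g2 = gg_props[OF U1 U2 hh(2) s1(2)]
  have ka0: "ka \<ge> 0" "kb \<ge> 0" using ka kb by auto
  have K1: "Good (strip 1) (ball 0 bm) (Kint ka (-1) (gg h1c (-1) U1 U2))" by (rule Kint_good[OF g1(1) ka0(1)])
  have K2: "Good (strip 1) (ball 0 bm) (Kint kb 1 (gg h2c 1 U1 U2))" by (rule Kint_good[OF g2(1) ka0(2)])
  have bd: "2 * pi * cm * BG \<le> R" unfolding R_def by simp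
  show "Inv (T1 U1 U2)" unfolding Inv_def
  proof (intro conjI)
    show "Good (strip 1) (ball 0 bm) (T1 U1 U2)" unfolding T1_def by (rule Good_cmult[OF K1])
    show "\<forall>z\<in>strip 1. \<forall>w\<in>ball 0 bm. norm (T1 U1 U2 z w) \<le> R"
    proof (intro ballI)
      fix z w :: complex assume z: "z \<in> strip 1" and w: "w \<in> ball 0 bm"
      have "norm (Kint ka (-1) (gg h1c (-1) U1 U2) z w) \<le> 2 * pi * BG"
        by (rule Kint_bound[OF g1(1) z w g1(2) ka0(1)])
      then have "ca * norm (Kint ka (-1) (gg h1c (-1) U1 U2) z w) \<le> cm * (2 * pi * BG)"
        using ca cm by (intro mult_mono) auto
      then show "norm (T1 U1 U2 z w) \<le> R" unfolding T1_def using bd ca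
        by (simp add: norm_mult mult_ac)
    qed
    show "\<forall>z w. T1 U1 U2 (z + of_real (2*pi)) w = T1 U1 U2 z w"
      unfolding T1_def using Kint_per[OF g1(3)] by simp
    show "\<forall>x y. \<bar>y\<bar> < bm \<longrightarrow> T1 U1 U2 (of_real x) (of_real y) \<in> \<real>"
    proof (intro allI impI)
      fix x y :: real assume y: "\<bar>y\<bar> < bm"
      have "Kint ka (-1) (gg h1c (-1) U1 U2) (of_real x) (of_real y) \<in> \<real>"
        by (rule Kint_real[OF g1(1)]) (use y g1(4) in auto)
      then show "T1 U1 U2 (of_real x) (of_real y) \<in> \<real>" unfolding T1_def by auto
    qed
  qed
  show "Inv (T2 U1 U2)" unfolding Inv_def
  proof (intro conjI)
    show "Good (strip 1) (ball 0 bm) (T2 U1 U2)" unfolding T2_def by (rule Good_cmult[OF K2])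
    show "\<forall>z\<in>strip 1. \<forall>w\<in>ball 0 bm. norm (T2 U1 U2 z w) \<le> R"
    proof (intro ballI)
      fix z w :: complex assume z: "z \<in> strip 1" and w: "w \<in> ball 0 bm"
      have "norm (Kint kb 1 (gg h2c 1 U1 U2) z w) \<le> 2 * pi * BG"
        by (rule Kint_bound[OF g2(1) z w g2(2) ka0(2)])
      then have "cb * norm (Kint kb 1 (gg h2c 1 U1 U2) z w) \<le> cm * (2 * pi * BG)"
        using cb cm by (intro mult_mono) auto
      then show "norm (T2 U1 U2 z w) \<le> R" unfolding T2_def using bd cb
        by (simp add: norm_mult mult_ac)
    qed
    show "\<forall>z w. T2 U1 U2 (z + of_real (2*pi)) w = T2 U1 U2 z w"
      unfolding T2_def using Kint_per[OF g2(3)] by simp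
    show "\<forall>x y. \<bar>y\<bar> < bm \<longrightarrow> T2 U1 U2 (of_real x) (of_real y) \<in> \<real>"
    proof (intro allI impI)
      fix x y :: real assume y: "\<bar>y\<bar> < bm"
      have "Kint kb 1 (gg h2c 1 U1 U2) (of_real x) (of_real y) \<in> \<real>"
        by (rule Kint_real[OF g2(1)]) (use y g2(4) in auto)
      then show "T2 U1 U2 (of_real x) (of_real y) \<in> \<real>" unfolding T2_def by auto
    qed
  qed
qed

end

context sys begin

lemma gg_diff:
  assumes U1: "Inv U1" and U2: "Inv U2" and V1: "Inv V1" and V2: "Inv V2"
    and hc: "hc \<in> {h1c, h2c}" and sg: "\<bar>sg\<bar> = 1" and z: "z \<in> strip 1" and w: "w \<in> ball 0 bm"
  shows "norm (gg hc sg U1 U2 z w - gg hc sg V1 V2 z w)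
          \<le> Lam * bm * (norm (U1 z w - V1 z w) + norm (U2 z w - V2 z w))"
proof -
  have "norm (gg hc sg U1 U2 z w - gg hc sg V1 V2 z w)
      \<le> Lam * (norm (w * U1 z w - w * V1 z w) + norm (w * U2 z w - w * V2 z w))"
    unfolding gg_def by (rule Phi_lip[OF hc sg z small[OF U1 z w] small[OF U2 z w] small[OF V1 z w] small[OF V2 z w]])
  also have "\<dots> = Lam * norm w * (norm (U1 z w - V1 z w) + norm (U2 z w - V2 z w))"
    by (simp add: norm_mult distrib_left mult.assoc flip: right_diff_distrib)
  also have "\<dots> \<le> Lam * bm * (norm (U1 z w - V1 z w) + norm (U2 z w - V2 z w))"
    using w Lam by (intro mult_right_mono mult_left_mono) auto
  finally show ?thesis .
qed

lemma contr:
  assumes U1: "Inv U1" and U2: "Inv U2" and V1: "Inv V1" and V2: "Inv V2"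
    and E: "\<forall>z\<in>strip 1. \<forall>w\<in>ball 0 bm. norm (U1 z w - V1 z w) + norm (U2 z w - V2 z w) \<le> E"
  shows "\<forall>z\<in>strip 1. \<forall>w\<in>ball 0 bm. norm (T1 U1 U2 z w - T1 V1 V2 z w) + norm (T2 U1 U2 z w - T2 V1 V2 z w) \<le> E/2"
proof (intro ballI)
  fix z w :: complex assume z: "z \<in> strip 1" and w: "w \<in> ball 0 bm"
  have z0: "(0::complex) \<in> strip 1" by (simp add: strip_def)
  have w0: "(0::complex) \<in> ball 0 bm" using bm by simp
  have E0: "E \<ge> 0" using E z0 w0 by (meson add_nonneg_nonneg norm_ge_zero order_trans)
  have LbE: "Lam * bm * E \<ge> 0" using Lam bm E0 by simp
  have s1: "\<bar>-1::real\<bar> = 1" "\<bar>1::real\<bar> = 1" by auto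
  have hh: "h1c \<in> {h1c, h2c}" "h2c \<in> {h1c, h2c}" by auto
  have ka0: "ka \<ge> 0" "kb \<ge> 0" using ka kb by auto
  have gd: "\<forall>z\<in>strip 1. \<forall>w\<in>ball 0 bm. norm (gg hc sg U1 U2 z w - gg hc sg V1 V2 z w) \<le> Lam * bm * E"
    if hc: "hc \<in> {h1c, h2c}" and sg: "\<bar>sg\<bar> = 1" for hc sg
  proof (intro ballI)
    fix z w :: complex assume z: "z \<in> strip 1" and w: "w \<in> ball 0 bm"
    have "Lam * bm * (norm (U1 z w - V1 z w) + norm (U2 z w - V2 z w)) \<le> Lam * bm * E"
      using E z w Lam bm by (intro mult_left_mono) auto
    then show "norm (gg hc sg U1 U2 z w - gg hc sg V1 V2 z w) \<le> Lam * bm * E"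
      using gg_diff[OF U1 U2 V1 V2 hc sg z w] by linarith
  qed
  have Gd: "Good (strip 1) (ball 0 bm) (\<lambda>z w. gg hc sg U1 U2 z w - gg hc sg V1 V2 z w)"
    if hc: "hc \<in> {h1c, h2c}" and sg: "\<bar>sg\<bar> = 1" for hc sg
    by (rule Good_diff[OF gg_props(1)[OF U1 U2 hc sg] gg_props(1)[OF V1 V2 hc sg]])
  have K1: "norm (Kint ka (-1) (gg h1c (-1) U1 U2) z w - Kint ka (-1) (gg h1c (-1) V1 V2) z w) \<le> 2 * pi * (Lam * bm * E)"
    unfolding Kint_diff[OF gg_props(1)[OF U1 U2 hh(1) s1(1)] gg_props(1)[OF V1 V2 hh(1) s1(1)] z w]
    by (rule Kint_bound[OF Gd[OF hh(1) s1(1)] z w gd[OF hh(1) s1(1)] ka0(1)])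
  have K2: "norm (Kint kb 1 (gg h2c 1 U1 U2) z w - Kint kb 1 (gg h2c 1 V1 V2) z w) \<le> 2 * pi * (Lam * bm * E)"
    unfolding Kint_diff[OF gg_props(1)[OF U1 U2 hh(2) s1(2)] gg_props(1)[OF V1 V2 hh(2) s1(2)] z w]
    by (rule Kint_bound[OF Gd[OF hh(2) s1(2)] z w gd[OF hh(2) s1(2)] ka0(2)])
  have "norm (T1 U1 U2 z w - T1 V1 V2 z w) = ca * norm (Kint ka (-1) (gg h1c (-1) U1 U2) z w - Kint ka (-1) (gg h1c (-1) V1 V2) z w)"
    unfolding T1_def using ca by (simp add: norm_mult flip: right_diff_distrib)
  also have "\<dots> \<le> cm * (2 * pi * (Lam * bm * E))" using K1 ca cm by (intro mult_mono) auto
  finally have 1: "norm (T1 U1 U2 z w - T1 V1 V2 z w) \<le> cm * (2 * pi * (Lam * bm * E))" .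
  have "norm (T2 U1 U2 z w - T2 V1 V2 z w) = cb * norm (Kint kb 1 (gg h2c 1 U1 U2) z w - Kint kb 1 (gg h2c 1 V1 V2) z w)"
    unfolding T2_def using cb by (simp add: norm_mult norm_minus_commute flip: right_diff_distrib)
  also have "\<dots> \<le> cm * (2 * pi * (Lam * bm * E))" using K2 cb cm by (intro mult_mono) auto
  finally have 2: "norm (T2 U1 U2 z w - T2 V1 V2 z w) \<le> cm * (2 * pi * (Lam * bm * E))" .
  have "norm (T1 U1 U2 z w - T1 V1 V2 z w) + norm (T2 U1 U2 z w - T2 V1 V2 z w)
     \<le> cm * (2 * pi * (Lam * bm * E)) + cm * (2 * pi * (Lam * bm * E))" by (rule add_mono[OF 1 2])
  also have "\<dots> = (4 * pi * cm * Lam * bm) * E"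
    by (simp add: algebra_simps)
  also have "\<dots> \<le> 1/2 * E" using bm(3) E0 by (rule mult_right_mono)
  finally show "norm (T1 U1 U2 z w - T1 V1 V2 z w) + norm (T2 U1 U2 z w - T2 V1 V2 z w) \<le> E/2"
    by simp
qed

end

context sys begin

definition step :: "(complex \<Rightarrow> complex \<Rightarrow> complex) \<times> (complex \<Rightarrow> complex \<Rightarrow> complex)
    \<Rightarrow> (complex \<Rightarrow> complex \<Rightarrow> complex) \<times> (complex \<Rightarrow> complex \<Rightarrow> complex)" where
  "step p = (T1 (fst p) (snd p), T2 (fst p) (snd p))"

definition "u1 n = fst ((step ^^ n) (\<lambda>z w. 0, \<lambda>z w. 0))"
definition "u2 n = snd ((step ^^ n) (\<lambda>z w. 0, \<lambda>z w. 0))"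

lemma u_Suc: "u1 (Suc n) = T1 (u1 n) (u2 n)" "u2 (Suc n) = T2 (u1 n) (u2 n)"
  unfolding u1_def u2_def by (simp_all add: step_def)

lemma u_0: "u1 0 = (\<lambda>z w. 0)" "u2 0 = (\<lambda>z w. 0)" unfolding u1_def u2_def by simp_all

lemma Inv0: "Inv (\<lambda>z w. 0)"
  unfolding Inv_def Good_def using R by auto

lemma u_Inv: "Inv (u1 n) \<and> Inv (u2 n)"
  by (induction n) (auto simp: u_0 u_Suc Inv0 T_Inv)

lemma u_step: "\<forall>z\<in>strip 1. \<forall>w\<in>ball 0 bm.
    norm (u1 (Suc n) z w - u1 n z w) + norm (u2 (Suc n) z w - u2 n z w) \<le> 2 * R * (1/2)^n"
proof (induction n)
  case 0
  show ?case
  proof (intro ballI)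
    fix z w :: complex assume "z \<in> strip 1" "w \<in> ball 0 bm"
    then have "norm (u1 1 z w) \<le> R" "norm (u2 1 z w) \<le> R" using u_Inv[of 1] unfolding Inv_def by auto
    then show "norm (u1 (Suc 0) z w - u1 0 z w) + norm (u2 (Suc 0) z w - u2 0 z w) \<le> 2 * R * (1/2)^0"
      by (simp add: u_0)
  qed
next
  case (Suc n)
  have "\<forall>z\<in>strip 1. \<forall>w\<in>ball 0 bm. norm (T1 (u1 (Suc n)) (u2 (Suc n)) z w - T1 (u1 n) (u2 n) z w)
      + norm (T2 (u1 (Suc n)) (u2 (Suc n)) z w - T2 (u1 n) (u2 n) z w) \<le> 2 * R * (1/2)^n / 2"
    by (rule contr) (use u_Inv Suc.IH in auto)
  then show ?case unfolding u_Suc[of "Suc n"] u_Suc[of n] by simp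
qed

lemma u_cauchy:
  assumes "n \<le> m"
  shows "\<forall>z\<in>strip 1. \<forall>w\<in>ball 0 bm.
    norm (u1 m z w - u1 n z w) + norm (u2 m z w - u2 n z w) \<le> 4 * R * ((1/2)^n - (1/2)^m)"
  using assms
proof (induction m rule: dec_induct)
  case base
  then show ?case by simp
next
  case (step m)
  show ?case
  proof (intro ballI)
    fix z w :: complex assume zw: "z \<in> strip 1" "w \<in> ball 0 bm"
    have a: "norm (u1 m z w - u1 n z w) + norm (u2 m z w - u2 n z w) \<le> 4 * R * ((1/2)^n - (1/2)^m)"
      using step.IH zw by blast
    have b: "norm (u1 (Suc m) z w - u1 m z w) + norm (u2 (Suc m) z w - u2 m z w) \<le> 2 * R * (1/2)^m"
      using u_step zw by blast
    have "norm (u1 (Suc m) z w - u1 n z w) \<le> norm (u1 (Suc m) z w - u1 m z w) + norm (u1 m z w - u1 n z w)"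
      by (rule order_trans[OF _ norm_triangle_ineq]) simp
    moreover have "norm (u2 (Suc m) z w - u2 n z w) \<le> norm (u2 (Suc m) z w - u2 m z w) + norm (u2 m z w - u2 n z w)"
      by (rule order_trans[OF _ norm_triangle_ineq]) simp
    moreover have "4 * R * ((1/2)^n - (1/2)^m) + 2 * R * (1/2)^m = 4 * R * ((1/2)^n - (1/2)^Suc m)"
      by (simp add: algebra_simps)
    ultimately show "norm (u1 (Suc m) z w - u1 n z w) + norm (u2 (Suc m) z w - u2 n z w)
        \<le> 4 * R * ((1/2)^n - (1/2)^Suc m)" using a b by linarith
  qed
qed

lemma u_cauchy':
  assumes "n \<le> m" "z \<in> strip 1" "w \<in> ball 0 bm"
  shows "norm (u1 m z w - u1 n z w) + norm (u2 m z w - u2 n z w) \<le> 4 * R * (1/2)^n"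
proof -
  have "4 * R * ((1/2)^n - (1/2)^m) \<le> 4 * R * (1/2)^n" using R by (simp add: mult_left_mono)
  then show ?thesis using u_cauchy[OF assms(1)] assms(2,3) by (meson order_trans)
qed

lemma geo0: "(\<lambda>n. 4 * R * (1/2::real)^n) \<longlonglongrightarrow> 0"
  by (intro tendsto_mult_right_zero LIMSEQ_power_zero) simp

lemma u_conv:
  assumes z: "z \<in> strip 1" and w: "w \<in> ball 0 bm"
  shows "convergent (\<lambda>n. u1 n z w)" "convergent (\<lambda>n. u2 n z w)"
proof -
  have C: "Cauchy (\<lambda>n. u1 n z w) \<and> Cauchy (\<lambda>n. u2 n z w)"
  proof -
    have "\<exists>M. \<forall>m\<ge>M. \<forall>n\<ge>M. dist (u1 m z w) (u1 n z w) < e \<and> dist (u2 m z w) (u2 n z w) < e"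
      if e: "e > 0" for e
    proof -
      obtain M where M: "\<forall>n\<ge>M. 4 * R * (1/2)^n < e"
        using order_tendstoD(2)[OF geo0 e] unfolding eventually_sequentially by blast
      have "dist (u1 m z w) (u1 n z w) < e \<and> dist (u2 m z w) (u2 n z w) < e" if "m \<ge> M" "n \<ge> M" for m n
      proof (cases "n \<le> m")
        case True
        then have "norm (u1 m z w - u1 n z w) + norm (u2 m z w - u2 n z w) \<le> 4 * R * (1/2)^n"
          using u_cauchy' z w by blast
        then show ?thesis using M that by (smt (verit) dist_norm norm_ge_zero)
      next
        case False
        then have "norm (u1 n z w - u1 m z w) + norm (u2 n z w - u2 m z w) \<le> 4 * R * (1/2)^m"
          using u_cauchy' z w by simp
        then show ?thesis using M that by (smt (verit) dist_norm dist_commute norm_ge_zero)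
      qed
      then show ?thesis by blast
    qed
    then show ?thesis unfolding Cauchy_def by meson
  qed
  then show "convergent (\<lambda>n. u1 n z w)" "convergent (\<lambda>n. u2 n z w)"
    using Cauchy_convergent_iff by blast+
qed

definition "U1 z w = lim (\<lambda>n. u1 n z w)"
definition "U2 z w = lim (\<lambda>n. u2 n z w)"

lemma U_lim:
  assumes z: "z \<in> strip 1" and w: "w \<in> ball 0 bm"
  shows "(\<lambda>n. u1 n z w) \<longlonglongrightarrow> U1 z w" "(\<lambda>n. u2 n z w) \<longlonglongrightarrow> U2 z w"
  using u_conv[OF z w] unfolding U1_def U2_def by (simp_all add: convergent_LIMSEQ_iff)

lemma U_bound:
  assumes z: "z \<in> strip 1" and w: "w \<in> ball 0 bm"
  shows "norm (U1 z w - u1 n z w) + norm (U2 z w - u2 n z w) \<le> 4 * R * (1/2)^n"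
proof -
  have L: "(\<lambda>m. norm (u1 m z w - u1 n z w) + norm (u2 m z w - u2 n z w))
      \<longlonglongrightarrow> norm (U1 z w - u1 n z w) + norm (U2 z w - u2 n z w)"
    using U_lim[OF z w] by (intro tendsto_intros)
  have "\<exists>N. \<forall>m\<ge>N. norm (u1 m z w - u1 n z w) + norm (u2 m z w - u2 n z w) \<le> 4 * R * (1/2)^n"
    using u_cauchy' z w by blast
  then show ?thesis by (rule LIMSEQ_le_const2[OF L])
qed

end

context sys begin

lemma lim_from_bound:
  assumes "\<And>n. norm (F - f n) \<le> 4 * R * (1/2)^n"
  shows "f \<longlonglongrightarrow> (F::complex)"
proof -
  have "(\<lambda>n. f n - F) \<longlonglongrightarrow> 0"
    by (rule Lim_null_comparison[OF _ geo0]) (use assms in \<open>auto simp: norm_minus_commute\<close>)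
  then show ?thesis by (rule LIM_zero_cancel)
qed

lemma Inv_limit:
  assumes fI: "\<And>n. Inv (f n)"
    and fb: "\<And>z w n. z \<in> strip 1 \<Longrightarrow> w \<in> ball 0 bm \<Longrightarrow> norm (F z w - f n z w) \<le> 4 * R * (1/2)^n"
    and Fd: "\<And>z w. F z w = lim (\<lambda>n. f n z w)"
  shows "Inv F"
proof -
  have G: "Good (strip 1) (ball 0 bm) (f n)" for n using fI unfolding Inv_def by blast
  have lim: "(\<lambda>n. f n z w) \<longlonglongrightarrow> F z w" if "z \<in> strip 1" "w \<in> ball 0 bm" for z w
    by (rule lim_from_bound) (rule fb[OF that])
  have hz: "(\<lambda>z. F z w) holomorphic_on strip 1" if w: "w \<in> ball 0 bm" for w
  proof (rule holo_local[OF open_strip])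
    fix z0 assume z0: "z0 \<in> strip 1"
    obtain r0 where r0: "r0 > 0" "ball z0 r0 \<subseteq> strip 1" using open_strip z0 openE by blast
    define r where "r = r0 / 2"
    have r: "r > 0" "cball z0 r \<subseteq> strip 1" using r0 unfolding r_def by (auto simp: subset_eq dist_commute)
    have ul: "uniform_limit (cball z0 r) (\<lambda>n s. f n s w) (\<lambda>s. F s w) sequentially"
    proof (rule uniform_limit_bound[OF _ geo0])
      fix n s assume "s \<in> cball z0 r"
      then have "s \<in> strip 1" using r by blast
      then show "dist (f n s w) (F s w) \<le> 4 * R * (1/2)^n" using fb[OF _ w] by (simp add: dist_norm norm_minus_commute)
    qed
    have "\<forall>\<^sub>F n in sequentially. continuous_on (cball z0 r) (\<lambda>s. f n s w) \<and> (\<lambda>s. f n s w) holomorphic_on ball z0 r"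
    proof (intro always_eventually allI conjI)
      fix n
      have "(\<lambda>s. f n s w) holomorphic_on strip 1" using G w unfolding Good_def by blast
      then show "continuous_on (cball z0 r) (\<lambda>s. f n s w)" "(\<lambda>s. f n s w) holomorphic_on ball z0 r"
        using r ball_subset_cball holomorphic_on_imp_continuous_on holomorphic_on_subset by blast+
    qed
    then obtain "(\<lambda>s. F s w) holomorphic_on ball z0 r"
      using holomorphic_uniform_limit[OF _ ul] by auto
    then show "(\<lambda>s. F s w) field_differentiable at z0" using r(1) holomorphic_on_imp_differentiable_at by auto
  qed
  have hw: "(\<lambda>w. F z w) holomorphic_on ball 0 bm" if z: "z \<in> strip 1" for z
  proof (rule holo_local[OF open_ball])
    fix z0 assume z0: "z0 \<in> ball (0::complex) bm"
    obtain r0 where r0: "r0 > 0" "ball z0 r0 \<subseteq> ball 0 bm" using z0 openE open_ball by blast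
    define r where "r = r0 / 2"
    have r: "r > 0" "cball z0 r \<subseteq> ball 0 bm" using r0 unfolding r_def by (auto simp: subset_eq dist_commute)
    have ul: "uniform_limit (cball z0 r) (\<lambda>n s. f n z s) (\<lambda>s. F z s) sequentially"
    proof (rule uniform_limit_bound[OF _ geo0])
      fix n s assume "s \<in> cball z0 r"
      then have "s \<in> ball 0 bm" using r by blast
      then show "dist (f n z s) (F z s) \<le> 4 * R * (1/2)^n" using fb[OF z] by (simp add: dist_norm norm_minus_commute)
    qed
    have "\<forall>\<^sub>F n in sequentially. continuous_on (cball z0 r) (\<lambda>s. f n z s) \<and> (\<lambda>s. f n z s) holomorphic_on ball z0 r"
    proof (intro always_eventually allI conjI)
      fix n
      have "(\<lambda>s. f n z s) holomorphic_on ball 0 bm" using G z unfolding Good_def by blast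
      then show "continuous_on (cball z0 r) (\<lambda>s. f n z s)" "(\<lambda>s. f n z s) holomorphic_on ball z0 r"
        using r ball_subset_cball holomorphic_on_imp_continuous_on holomorphic_on_subset by blast+
    qed
    then obtain "(\<lambda>s. F z s) holomorphic_on ball z0 r"
      using holomorphic_uniform_limit[OF _ ul] by auto
    then show "(\<lambda>s. F z s) field_differentiable at z0" using r(1) holomorphic_on_imp_differentiable_at by auto
  qed
  have bd: "\<forall>z\<in>strip 1. \<forall>w\<in>ball 0 bm. norm (F z w) \<le> R"
  proof (intro ballI)
    fix z w assume zw: "z \<in> strip 1" "w \<in> ball (0::complex) bm"
    show "norm (F z w) \<le> R"
      by (rule Lim_norm_ubound[OF _ lim[OF zw]]) (use fI zw in \<open>auto simp: Inv_def\<close>)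
  qed
  have per: "\<forall>z w. F (z + of_real (2*pi)) w = F z w"
    using fI unfolding Fd Inv_def by simp
  have rl: "\<forall>x y. \<bar>y\<bar> < bm \<longrightarrow> F (of_real x) (of_real y) \<in> \<real>"
  proof (intro allI impI)
    fix x y :: real assume y: "\<bar>y\<bar> < bm"
    have zw: "(of_real x :: complex) \<in> strip 1" "(of_real y :: complex) \<in> ball 0 bm"
      using y by (auto simp: real_in_strip)
    have "(\<lambda>n. Im (f n (of_real x) (of_real y))) \<longlonglongrightarrow> Im (F (of_real x) (of_real y))"
      by (rule tendsto_Im[OF lim[OF zw]])
    moreover have "Im (f n (of_real x) (of_real y)) = 0" for n
      using fI[of n] y unfolding Inv_def by (auto simp: complex_is_Real_iff)
    then have "(\<lambda>n. Im (f n (of_real x) (of_real y))) = (\<lambda>n. 0)" by simp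
    ultimately have "Im (F (of_real x) (of_real y)) = 0" using LIMSEQ_unique[OF _ tendsto_const] by metis
    then show "F (of_real x) (of_real y) \<in> \<real>" by (simp add: complex_is_Real_iff)
  qed
  have "Good (strip 1) (ball 0 bm) F" unfolding Good_def using hz hw bd by blast
  then show ?thesis unfolding Inv_def using bd per rl by blast
qed

lemma U_Inv: "Inv U1" "Inv U2"
proof -
  show "Inv U1"
  proof (rule Inv_limit[of u1])
    show "Inv (u1 n)" for n using u_Inv by blast
    show "norm (U1 z w - u1 n z w) \<le> 4 * R * (1/2)^n" if "z \<in> strip 1" "w \<in> ball 0 bm" for z w n
      by (rule order_trans[OF _ U_bound[OF that, of n]]) simp
  qed (simp add: U1_def)
  show "Inv U2"
  proof (rule Inv_limit[of u2])
    show "Inv (u2 n)" for n using u_Inv by blast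
    show "norm (U2 z w - u2 n z w) \<le> 4 * R * (1/2)^n" if "z \<in> strip 1" "w \<in> ball 0 bm" for z w n
      by (rule order_trans[OF _ U_bound[OF that, of n]]) simp
  qed (simp add: U2_def)
qed

lemma U_fix:
  assumes z: "z \<in> strip 1" and w: "w \<in> ball 0 bm"
  shows "T1 U1 U2 z w = U1 z w" "T2 U1 U2 z w = U2 z w"
proof -
  have c: "norm (T1 U1 U2 z w - u1 (Suc n) z w) + norm (T2 U1 U2 z w - u2 (Suc n) z w) \<le> 4 * R * (1/2)^n / 2" for n
  proof -
    have "\<forall>z\<in>strip 1. \<forall>w\<in>ball 0 bm. norm (T1 U1 U2 z w - T1 (u1 n) (u2 n) z w) + norm (T2 U1 U2 z w - T2 (u1 n) (u2 n) z w)
        \<le> 4 * R * (1/2)^n / 2"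
      by (rule contr) (use U_Inv u_Inv U_bound in auto)
    then show ?thesis unfolding u_Suc using z w by blast
  qed
  have l1: "(\<lambda>n. u1 (Suc n) z w) \<longlonglongrightarrow> T1 U1 U2 z w"
  proof (rule lim_from_bound)
    fix n have "0 \<le> 4*R*(1/2::real)^n" using R by simp
    then show "norm (T1 U1 U2 z w - u1 (Suc n) z w) \<le> 4 * R * (1/2)^n"
      using c[of n] norm_ge_zero[of "T2 U1 U2 z w - u2 (Suc n) z w"] by linarith
  qed
  have l2: "(\<lambda>n. u2 (Suc n) z w) \<longlonglongrightarrow> T2 U1 U2 z w"
  proof (rule lim_from_bound)
    fix n have "0 \<le> 4*R*(1/2::real)^n" using R by simp
    then show "norm (T2 U1 U2 z w - u2 (Suc n) z w) \<le> 4 * R * (1/2)^n"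
      using c[of n] norm_ge_zero[of "T1 U1 U2 z w - u1 (Suc n) z w"] by linarith
  qed
  show "T1 U1 U2 z w = U1 z w" using LIMSEQ_unique[OF l1 LIMSEQ_Suc[OF U_lim(1)[OF z w]]] .
  show "T2 U1 U2 z w = U2 z w" using LIMSEQ_unique[OF l2 LIMSEQ_Suc[OF U_lim(2)[OF z w]]] .
qed

end

context sys begin

lemma ca_eq: "complex_of_real ca * (1 - complex_of_real (exp (- ka * (2*pi)))) = 1"
proof -
  have "exp (- ka * (2*pi)) < 1" using ka by simp
  then have "ca * (1 - exp (- ka * (2*pi))) = 1" unfolding ca_def using ka by simp
  then show ?thesis by (metis of_real_1 of_real_diff of_real_mult)
qed

lemma cb_eq: "complex_of_real cb * (1 - complex_of_real (exp (- kb * (2*pi)))) = 1"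
proof -
  have "exp (- kb * (2*pi)) < 1" using kb by simp
  then have "cb * (1 - exp (- kb * (2*pi))) = 1" unfolding cb_def using kb by simp
  then show ?thesis by (metis of_real_1 of_real_diff of_real_mult)
qed

lemma U_ode:
  assumes z: "z \<in> strip 1" and w: "w \<in> ball 0 bm"
  shows "((\<lambda>s. U1 s w) has_field_derivative (- of_real ka * U1 z w + gg h1c (-1) U1 U2 z w)) (at z)"
    and "((\<lambda>s. U2 s w) has_field_derivative (of_real kb * U2 z w + gg h2c 1 U1 U2 z w)) (at z)"
proof -
  have s1: "\<bar>-1::real\<bar> = 1" "\<bar>1::real\<bar> = 1" by auto
  have hh: "h1c \<in> {h1c, h2c}" "h2c \<in> {h1c, h2c}" by auto
  note g1 = gg_props[OF U_Inv(1) U_Inv(2) hh(1) s1(1)]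
  note g2 = gg_props[OF U_Inv(1) U_Inv(2) hh(2) s1(2)]
  define e1 where "e1 = complex_of_real (exp (- ka * (2*pi)))"
  define e2 where "e2 = complex_of_real (exp (- kb * (2*pi)))"
  define K1 where "K1 = Kint ka (-1) (gg h1c (-1) U1 U2) z w"
  define K2 where "K2 = Kint kb 1 (gg h2c 1 U1 U2) z w"
  define G1 where "G1 = gg h1c (-1) U1 U2 z w"
  define G2 where "G2 = gg h2c 1 U1 U2 z w"
  have f1: "U1 z w = of_real ca * K1" using U_fix(1)[OF z w] unfolding T1_def K1_def by simp
  have f2: "U2 z w = - of_real cb * K2" using U_fix(2)[OF z w] unfolding T2_def K2_def by simp
  have D1: "((\<lambda>s. Kint ka (-1) (gg h1c (-1) U1 U2) s w) has_field_derivative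
      of_real (-1) * ((e1 - 1) * G1 + of_real ka * K1)) (at z)"
    using Kint_deriv[OF g1(1) z w, of ka "-1"] Kint_ftc[OF g1(1) g1(3) z w, of "-1" ka]
    unfolding e1_def G1_def K1_def by simp
  have D2: "((\<lambda>s. Kint kb 1 (gg h2c 1 U1 U2) s w) has_field_derivative
      of_real 1 * ((e2 - 1) * G2 + of_real kb * K2)) (at z)"
    using Kint_deriv[OF g2(1) z w, of kb 1] Kint_ftc[OF g2(1) g2(3) z w, of 1 kb]
    unfolding e2_def G2_def K2_def by simp
  have "((\<lambda>s. T1 U1 U2 s w) has_field_derivative of_real ca * (of_real (-1) * ((e1 - 1) * G1 + of_real ka * K1))) (at z)"
    unfolding T1_def by (rule DERIV_cmult[OF D1])
  moreover have "of_real ca * (of_real (-1) * ((e1 - 1) * G1 + of_real ka * K1))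
      = (of_real ca * (1 - e1)) * G1 - of_real ka * (of_real ca * K1)"
    by (simp add: algebra_simps)
  ultimately have "((\<lambda>s. T1 U1 U2 s w) has_field_derivative (- of_real ka * U1 z w + G1)) (at z)"
    using ca_eq f1 unfolding e1_def by simp
  then show "((\<lambda>s. U1 s w) has_field_derivative (- of_real ka * U1 z w + gg h1c (-1) U1 U2 z w)) (at z)"
    unfolding G1_def
    by (rule has_field_derivative_transform_within_open[OF _ open_strip z]) (use U_fix(1) w in blast)
  have "((\<lambda>s. T2 U1 U2 s w) has_field_derivative - of_real cb * (of_real 1 * ((e2 - 1) * G2 + of_real kb * K2))) (at z)"
    unfolding T2_def by (rule DERIV_cmult[OF D2])
  moreover have "- of_real cb * (of_real 1 * ((e2 - 1) * G2 + of_real kb * K2))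
      = (of_real cb * (1 - e2)) * G2 + of_real kb * (- of_real cb * K2)"
    by (simp add: algebra_simps)
  ultimately have "((\<lambda>s. T2 U1 U2 s w) has_field_derivative (of_real kb * U2 z w + G2)) (at z)"
    using cb_eq f2 unfolding e2_def by simp
  then show "((\<lambda>s. U2 s w) has_field_derivative (of_real kb * U2 z w + gg h2c 1 U1 U2 z w)) (at z)"
    unfolding G2_def
    by (rule has_field_derivative_transform_within_open[OF _ open_strip z]) (use U_fix(2) w in blast)
qed

end

lemma strip_mono: "a \<le> b \<Longrightarrow> strip a \<subseteq> strip b"
  unfolding strip_def by auto

lemma Dz_iter_good:
  assumes G: "Good (strip a) B G" and B: "open B" and e: "e > 0"
  shows "Good (strip (a - real i * e)) B ((Dz ^^ i) G)"
proof (induction i)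
  case 0 then show ?case using G by simp
next
  case (Suc i)
  have "Good (strip (a - real (Suc i) * e)) B (Dz ((Dz ^^ i) G))"
  proof (rule Dz_good[OF Suc.IH open_strip B e])
    fix z assume "z \<in> strip (a - real (Suc i) * e)"
    then show "ball z e \<subseteq> strip (a - real i * e)"
      using ball_strip[of z "a - real (Suc i) * e" "a - real i * e"] e by (simp add: algebra_simps)
  qed
  then show ?case by simp
qed

lemma Dw_iter_good:
  assumes G: "Good A (ball 0 c) G" and A: "open A" and e: "e > 0"
  shows "Good A (ball 0 (c - real j * e)) ((Dw ^^ j) G)"
proof (induction j)
  case 0 then show ?case using G by simp
next
  case (Suc j)
  have "Good A (ball 0 (c - real (Suc j) * e)) (Dw ((Dw ^^ j) G))"
  proof (rule Dw_good[OF Suc.IH A open_ball e])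
    fix w :: complex assume "w \<in> ball 0 (c - real (Suc j) * e)"
    then show "ball w e \<subseteq> ball 0 (c - real j * e)"
      by (auto simp: ball_subset_ball_iff dist_commute algebra_simps)
  qed
  then show ?case by simp
qed

lemma D_comm_iter:
  assumes G: "Good (strip a) (ball 0 c) G" and e: "e > 0"
  shows "\<forall>z\<in>strip (a - real (Suc i) * e). \<forall>w\<in>ball 0 (c - e). Dw ((Dz ^^ i) G) z w = (Dz ^^ i) (Dw G) z w"
proof (induction i)
  case 0 then show ?case by simp
next
  case (Suc i)
  show ?case
  proof (intro ballI)
    fix z w assume z: "z \<in> strip (a - real (Suc (Suc i)) * e)" and w: "w \<in> ball (0::complex) (c - e)"
    have Gi: "Good (strip (a - real i * e)) (ball 0 c) ((Dz ^^ i) G)" by (rule Dz_iter_good[OF G open_ball e])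
    have bz: "ball z e \<subseteq> strip (a - real (Suc i) * e)"
      using ball_strip[OF z, of "a - real (Suc i) * e"] e by (simp add: algebra_simps)
    have "strip (a - real (Suc i) * e) \<subseteq> strip (a - real i * e)" using e by (intro strip_mono) simp
    then have bz': "ball z e \<subseteq> strip (a - real i * e)" using bz by blast
    have bw: "ball w e \<subseteq> ball 0 c" using w by (auto simp: ball_subset_ball_iff dist_commute)
    have "Dw (Dz ((Dz ^^ i) G)) z w = Dz (Dw ((Dz ^^ i) G)) z w"
      by (rule D_comm[OF Gi open_strip open_ball e bz' bw])
    also have "\<dots> = Dz ((Dz ^^ i) (Dw G)) z w"
    proof -
      have zin: "z \<in> strip (a - real (Suc i) * e)" using bz e by (meson centre_in_ball subsetD)
      have "eventually (\<lambda>s. Dw ((Dz ^^ i) G) s w = (Dz ^^ i) (Dw G) s w) (nhds z)"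
        using eventually_nhds_in_open[OF open_strip zin] Suc.IH w
        by (auto elim!: eventually_mono)
      then show ?thesis unfolding Dz_def by (rule deriv_cong_ev) simp
    qed
    finally show "Dw ((Dz ^^ Suc i) G) z w = (Dz ^^ Suc i) (Dw G) z w" by simp
  qed
qed

lemma real_deriv_z:
  assumes "(\<lambda>s. G s w) holomorphic_on A" "open A" "of_real \<theta> \<in> A"
  shows "((\<lambda>s. Re (G (of_real s) w)) has_real_derivative Re (Dz G (of_real \<theta>) w)) (at \<theta> within X)"
proof -
  have "((\<lambda>s. G s w) has_field_derivative Dz G (of_real \<theta>) w) (at (of_real \<theta>))"
    unfolding Dz_def using holomorphic_derivI[OF assms] .
  then have "((\<lambda>x. G (of_real x) w) has_vector_derivative Dz G (of_real \<theta>) w) (at \<theta> within X)"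
    by (rule has_vector_derivative_real_field)
  then have "((\<lambda>x. Re (G (of_real x) w)) has_vector_derivative Re (Dz G (of_real \<theta>) w)) (at \<theta> within X)"
    by (rule bounded_linear.has_vector_derivative[OF bounded_linear_Re])
  then show ?thesis by (simp add: has_real_derivative_iff_has_vector_derivative)
qed

lemma real_deriv_w:
  assumes "(\<lambda>s. G z s) holomorphic_on B" "open B" "of_real m \<in> B"
  shows "((\<lambda>s. Re (G z (of_real s))) has_real_derivative Re (Dw G z (of_real m))) (at m within X)"
proof -
  have "((\<lambda>s. G z s) has_field_derivative Dw G z (of_real m)) (at (of_real m))"
    unfolding Dw_def using holomorphic_derivI[OF assms] .
  then have "((\<lambda>x. G z (of_real x)) has_vector_derivative Dw G z (of_real m)) (at m within X)"
    by (rule has_vector_derivative_real_field)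
  then have "((\<lambda>x. Re (G z (of_real x))) has_vector_derivative Re (Dw G z (of_real m))) (at m within X)"
    by (rule bounded_linear.has_vector_derivative[OF bounded_linear_Re])
  then show ?thesis by (simp add: has_real_derivative_iff_has_vector_derivative)
qed

lemma C3_from_Good:
  assumes G: "Good (strip 1) (ball 0 b) F" and m0: "0 < \<mu>0" "\<mu>0 < b/2"
  shows "\<exists>K. C3_bounded {0..\<mu>0} K (\<lambda>\<theta> m. Re (F (of_real \<theta>) (of_real m)))"
proof -
  have b: "b > 0" using m0 by simp
  define e where "e = min (1/8) (b/8)"
  have e: "e > 0" "e \<le> 1/8" "e \<le> b/8" unfolding e_def using b by auto
  define D where "D i j = (Dz ^^ i) ((Dw ^^ j) F)" for i j
  define A' where "A' = strip (1/2)"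
  define B' where "B' = ball (0::complex) (b/2)"
  have GD: "Good A' B' (D i j)" if "i \<le> 3" "j \<le> 3" for i j
  proof -
    have Gj: "Good (strip 1) (ball 0 (b - real j * e)) ((Dw ^^ j) F)" by (rule Dw_iter_good[OF G open_strip e(1)])
    have "Good (strip (1 - real i * e)) (ball 0 (b - real j * e)) (D i j)"
      unfolding D_def by (rule Dz_iter_good[OF Gj open_ball e(1)])
    moreover have "A' \<subseteq> strip (1 - real i * e)"
    proof -
      have "real i * e \<le> 3 * (1/8)" using that e by (intro mult_mono) auto
      then show ?thesis unfolding A'_def by (intro strip_mono) simp
    qed
    moreover have "B' \<subseteq> ball 0 (b - real j * e)"
    proof -
      have "real j * e \<le> 3 * (b/8)" using that e by (intro mult_mono) auto
      then show ?thesis unfolding B'_def using b by (intro subset_ball) linarith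
    qed
    ultimately show ?thesis by (rule Good_subset)
  qed
  have comm: "Dw (D i j) z w = D i (Suc j) z w" if "i + j < 3" "z \<in> A'" "w \<in> B'" for i j z w
  proof -
    have Gj: "Good (strip 1) (ball 0 (b - real j * e)) ((Dw ^^ j) F)" by (rule Dw_iter_good[OF G open_strip e(1)])
    have C: "\<forall>z\<in>strip (1 - real (Suc i) * e). \<forall>w\<in>ball 0 (b - real j * e - e).
        Dw ((Dz ^^ i) ((Dw ^^ j) F)) z w = (Dz ^^ i) (Dw ((Dw ^^ j) F)) z w"
      by (rule D_comm_iter[OF Gj e(1)])
    have "z \<in> strip (1 - real (Suc i) * e)"
    proof -
      have "real (Suc i) * e \<le> 3 * (1/8)" using that e by (intro mult_mono) auto
      then have "A' \<subseteq> strip (1 - real (Suc i) * e)" unfolding A'_def by (intro strip_mono) simp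
      then show ?thesis using that by blast
    qed
    moreover have "w \<in> ball 0 (b - real j * e - e)"
    proof -
      have "real (Suc j) * e \<le> 3 * (b/8)" using that e by (intro mult_mono) auto
      then have "B' \<subseteq> ball 0 (b - real j * e - e)" unfolding B'_def using b by (intro subset_ball) (simp add: algebra_simps)
      then show ?thesis using that by blast
    qed
    ultimately show ?thesis using C unfolding D_def by simp
  qed
  have "\<forall>i j. \<exists>M. i \<le> 3 \<longrightarrow> j \<le> 3 \<longrightarrow> (\<forall>z\<in>A'. \<forall>w\<in>B'. norm (D i j z w) \<le> M)"
    using GD unfolding Good_def by blast
  then obtain Mf where Mf: "\<And>i j. i \<le> 3 \<Longrightarrow> j \<le> 3 \<Longrightarrow> (\<forall>z\<in>A'. \<forall>w\<in>B'. norm (D i j z w) \<le> Mf i j)"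
    by metis
  define K where "K = (\<Sum>i\<le>3. \<Sum>j\<le>3. \<bar>Mf i j\<bar>)"
  have MK: "Mf i j \<le> K" if "i \<le> 3" "j \<le> 3" for i j
  proof -
    have "\<bar>Mf i j\<bar> \<le> (\<Sum>j\<le>3. \<bar>Mf i j\<bar>)" using that by (intro member_le_sum) auto
    also have "\<dots> \<le> (\<Sum>i\<le>3. \<Sum>j\<le>3. \<bar>Mf i j\<bar>)" using that by (intro member_le_sum[where f="\<lambda>i. \<Sum>j\<le>3. \<bar>Mf i j\<bar>"]) (auto intro: sum_nonneg)
    finally show ?thesis unfolding K_def by simp
  qed
  define P where "P i j \<theta> m = Re (D i j (of_real \<theta>) (of_real m))" for i j \<theta> m
  have inA: "(of_real \<theta> :: complex) \<in> A'" for \<theta> unfolding A'_def by (simp add: real_in_strip)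
  have inB: "(of_real m :: complex) \<in> B'" if "m \<in> {0..\<mu>0}" for m using that m0 unfolding B'_def by auto
  have "C3_bounded {0..\<mu>0} K (\<lambda>\<theta> m. Re (F (of_real \<theta>) (of_real m)))"
    unfolding C3_bounded_def
  proof (intro exI[of _ P] conjI allI impI ballI)
    show "P 0 0 = (\<lambda>\<theta> m. Re (F (of_real \<theta>) (of_real m)))" unfolding P_def D_def by simp
  next
    fix i j :: nat and \<theta> m :: real assume ij: "i + j < 3" and m: "m \<in> {0..\<mu>0}"
    have G': "Good A' B' (D i j)" using GD ij by simp
    have hz: "(\<lambda>s. D i j s (of_real m)) holomorphic_on A'" using G' inB[OF m] unfolding Good_def by blast
    have "((\<lambda>s. Re (D i j (of_real s) (of_real m))) has_real_derivative Re (Dz (D i j) (of_real \<theta>) (of_real m))) (at \<theta>)"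
      by (rule real_deriv_z[of "D i j" "of_real m" A' \<theta>, OF hz _ inA]) (simp add: A'_def open_strip)
    moreover have "Dz (D i j) = D (Suc i) j" unfolding D_def by simp
    ultimately show "((\<lambda>s. P i j s m) has_real_derivative P (Suc i) j \<theta> m) (at \<theta>)" unfolding P_def by simp
    have hw: "(\<lambda>s. D i j (of_real \<theta>) s) holomorphic_on B'" using G' inA unfolding Good_def by blast
    have "((\<lambda>s. Re (D i j (of_real \<theta>) (of_real s))) has_real_derivative Re (Dw (D i j) (of_real \<theta>) (of_real m))) (at m within {0..\<mu>0})"
      by (rule real_deriv_w[of "D i j" "of_real \<theta>" B' m, OF hw _ inB[OF m]]) (simp add: B'_def)
    then show "((\<lambda>s. P i j \<theta> s) has_real_derivative P i (Suc j) \<theta> m) (at m within {0..\<mu>0})"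
      unfolding P_def using comm[OF ij inA inB[OF m]] by simp
  next
    fix i j :: nat assume ij: "i + j \<le> 3"
    have G': "Good A' B' (D i j)" using GD ij by simp
    have c: "continuous_on (A' \<times> B') (\<lambda>p. D i j (fst p) (snd p))"
      using Good_cont[OF G'] unfolding A'_def B'_def by (simp add: open_strip)
    have "continuous_on (UNIV \<times> {0..\<mu>0}) (\<lambda>p. (\<lambda>p. D i j (fst p) (snd p)) (of_real (fst p) :: complex, of_real (snd p) :: complex))"
      by (rule continuous_on_compose2[OF c]) (use inA inB in \<open>auto intro!: continuous_intros\<close>)
    then show "continuous_on (UNIV \<times> {0..\<mu>0}) (\<lambda>(\<theta>, m). P i j \<theta> m)"
      unfolding P_def by (auto simp: case_prod_unfold intro!: continuous_intros)
  next
    fix i j :: nat and \<theta> m :: real assume ij: "i + j \<le> 3" and m: "m \<in> {0..\<mu>0}"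
    have "\<bar>P i j \<theta> m\<bar> \<le> norm (D i j (of_real \<theta>) (of_real m))" unfolding P_def by (rule abs_Re_le_cmod)
    also have "\<dots> \<le> Mf i j" using Mf[of i j] ij inA inB[OF m] by auto
    also have "\<dots> \<le> K" using MK ij by auto
    finally show "\<bar>P i j \<theta> m\<bar> \<le> K" .
  qed
  then show ?thesis by blast
qed

lemma per_int_rep1:
  fixes X F :: "real \<Rightarrow> real"
  assumes per: "\<And>s. X (s + 2*pi) = X s"
    and d: "\<And>s. (X has_real_derivative (- k * X s + F s)) (at s)"
  shows "((\<lambda>r. exp (- k * r) * F (\<theta> - r)) has_integral ((1 - exp (- k * (2*pi))) * X \<theta>)) {0..2*pi}"
proof -
  define q where "q r = exp (- k * r) * X (\<theta> - r)" for r
  have dq: "(q has_real_derivative (- (exp (- k * r) * F (\<theta> - r)))) (at r within {0..2*pi})" for r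
  proof -
    have dX: "((\<lambda>r. X (\<theta> - r)) has_real_derivative (- k * X (\<theta> - r) + F (\<theta> - r)) * (-1)) (at r)"
    proof -
      have g: "((\<lambda>r. \<theta> - r) has_real_derivative -1) (at r)" by (auto intro!: derivative_eq_intros)
      show ?thesis using DERIV_chain2[where f=X and g="\<lambda>r. \<theta> - r" and x=r and s=UNIV, OF d[of "\<theta> - r"] g] by simp
    qed
    have "(q has_real_derivative (exp (- k * r) * ((- k * X (\<theta> - r) + F (\<theta> - r)) * (-1)) + exp (- k * r) * (- k) * X (\<theta> - r))) (at r)"
      unfolding q_def by (rule derivative_eq_intros dX | simp)+
    then show ?thesis by (simp add: algebra_simps has_field_derivative_at_within)
  qed
  have A: "((\<lambda>r. - (exp (- k * r) * F (\<theta> - r))) has_integral (q (2*pi) - q 0)) {0..2*pi}"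
    using dq by (intro fundamental_theorem_of_calculus) (auto simp: has_real_derivative_iff_has_vector_derivative[symmetric])
  have B: "q (2*pi) - q 0 = - ((1 - exp (- k * (2*pi))) * X \<theta>)"
    unfolding q_def using per[of "\<theta> - 2*pi"] by (simp add: algebra_simps)
  have "((\<lambda>r. - (- (exp (- k * r) * F (\<theta> - r)))) has_integral - (q (2*pi) - q 0)) {0..2*pi}"
    by (rule has_integral_neg[OF A])
  then show ?thesis unfolding B by simp
qed

lemma per_int_rep2:
  fixes Y F :: "real \<Rightarrow> real"
  assumes per: "\<And>s. Y (s + 2*pi) = Y s"
    and d: "\<And>s. (Y has_real_derivative (k * Y s + F s)) (at s)"
  shows "((\<lambda>r. exp (- k * r) * F (\<theta> + r)) has_integral ((exp (- k * (2*pi)) - 1) * Y \<theta>)) {0..2*pi}"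
proof -
  define q where "q r = exp (- k * r) * Y (\<theta> + r)" for r
  have dq: "(q has_real_derivative (exp (- k * r) * F (\<theta> + r))) (at r within {0..2*pi})" for r
  proof -
    have dY: "((\<lambda>r. Y (\<theta> + r)) has_real_derivative (k * Y (\<theta> + r) + F (\<theta> + r)) * 1) (at r)"
    proof -
      have g: "((\<lambda>r. \<theta> + r) has_real_derivative 1) (at r)" by (auto intro!: derivative_eq_intros)
      show ?thesis using DERIV_chain2[where f=Y and g="\<lambda>r. \<theta> + r" and x=r and s=UNIV, OF d[of "\<theta> + r"] g] by simp
    qed
    have "(q has_real_derivative (exp (- k * r) * ((k * Y (\<theta> + r) + F (\<theta> + r)) * 1) + exp (- k * r) * (- k) * Y (\<theta> + r))) (at r)"
      unfolding q_def by (rule derivative_eq_intros dY | simp)+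
    then show ?thesis by (simp add: algebra_simps has_field_derivative_at_within)
  qed
  have A: "((\<lambda>r. exp (- k * r) * F (\<theta> + r)) has_integral (q (2*pi) - q 0)) {0..2*pi}"
    using dq by (intro fundamental_theorem_of_calculus) (auto simp: has_real_derivative_iff_has_vector_derivative[symmetric])
  have B: "q (2*pi) - q 0 = (exp (- k * (2*pi)) - 1) * Y \<theta>"
    unfolding q_def using per[of \<theta>] by (simp add: algebra_simps)
  show ?thesis using A unfolding B .
qed

locale sysr = sys +
  fixes h1 h2 H :: "real \<Rightarrow> real \<Rightarrow> real"
  assumes link1: "\<And>x y. \<bar>x\<bar> \<le> r0 \<Longrightarrow> \<bar>y\<bar> \<le> r0 \<Longrightarrow> h1c (of_real x) (of_real y) = of_real (h1 x y)"
    and link2: "\<And>x y. \<bar>x\<bar> \<le> r0 \<Longrightarrow> \<bar>y\<bar> \<le> r0 \<Longrightarrow> h2c (of_real x) (of_real y) = of_real (h2 x y)"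
    and link3: "\<And>x y. \<bar>x\<bar> \<le> r0 \<Longrightarrow> \<bar>y\<bar> \<le> r0 \<Longrightarrow> Hc (of_real x) (of_real y) = of_real (H x y)"
begin

definition "phi = (\<lambda>\<theta> m. Re (U1 (of_real \<theta>) (of_real m)))"
definition "psi = (\<lambda>\<theta> m. Re (U2 (of_real \<theta>) (of_real m)))"
definition "g1r \<theta> a b = - (1 + h1 a b) * (\<rho> * H a b + sin \<theta>) / \<omega>"
definition "g2r \<theta> a b = (1 + h2 a b) * (\<rho> * H a b + sin \<theta>) / \<omega>"

lemma Phi_link:
  assumes "\<bar>a\<bar> \<le> r0" "\<bar>b\<bar> \<le> r0"
  shows "Phi h1c (-1) (of_real \<theta>) (of_real a) (of_real b) = of_real (g1r \<theta> a b)"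
    and "Phi h2c 1 (of_real \<theta>) (of_real a) (of_real b) = of_real (g2r \<theta> a b)"
  unfolding Phi_def g1r_def g2r_def using assms
  by (simp_all add: link1 link2 link3 sin_of_real)

lemma g_lip:
  assumes "\<bar>a\<bar> \<le> r0/2" "\<bar>b\<bar> \<le> r0/2" "\<bar>a'\<bar> \<le> r0/2" "\<bar>b'\<bar> \<le> r0/2"
  shows "\<bar>g1r \<theta> a b - g1r \<theta> a' b'\<bar> \<le> Lam * (\<bar>a - a'\<bar> + \<bar>b - b'\<bar>)"
    and "\<bar>g2r \<theta> a b - g2r \<theta> a' b'\<bar> \<le> Lam * (\<bar>a - a'\<bar> + \<bar>b - b'\<bar>)"
proof -
  have r2: "r0/2 \<le> r0" using r0 by simp
  have hh: "h1c \<in> {h1c, h2c}" "h2c \<in> {h1c, h2c}" by auto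
  have s1: "\<bar>-1::real\<bar> = 1" "\<bar>1::real\<bar> = 1" by auto
  have z: "(of_real \<theta> :: complex) \<in> strip 1" by (simp add: real_in_strip)
  have n: "norm (of_real a :: complex) \<le> r0/2" "norm (of_real b :: complex) \<le> r0/2"
     "norm (of_real a' :: complex) \<le> r0/2" "norm (of_real b' :: complex) \<le> r0/2" using assms by auto
  have "norm (Phi h1c (-1) (of_real \<theta>) (of_real a) (of_real b) - Phi h1c (-1) (of_real \<theta>) (of_real a') (of_real b'))
      \<le> Lam * (norm (of_real a - of_real a' :: complex) + norm (of_real b - of_real b' :: complex))"
    by (rule Phi_lip[OF hh(1) s1(1) z n])
  then show "\<bar>g1r \<theta> a b - g1r \<theta> a' b'\<bar> \<le> Lam * (\<bar>a - a'\<bar> + \<bar>b - b'\<bar>)"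
    using assms r2 by (simp add: Phi_link flip: of_real_diff)
  have "norm (Phi h2c 1 (of_real \<theta>) (of_real a) (of_real b) - Phi h2c 1 (of_real \<theta>) (of_real a') (of_real b'))
      \<le> Lam * (norm (of_real a - of_real a' :: complex) + norm (of_real b - of_real b' :: complex))"
    by (rule Phi_lip[OF hh(2) s1(2) z n])
  then show "\<bar>g2r \<theta> a b - g2r \<theta> a' b'\<bar> \<le> Lam * (\<bar>a - a'\<bar> + \<bar>b - b'\<bar>)"
    using assms r2 by (simp add: Phi_link flip: of_real_diff)
qed

lemma U_real:
  assumes "\<bar>m\<bar> < bm"
  shows "U1 (of_real \<theta>) (of_real m) = of_real (phi \<theta> m)" "U2 (of_real \<theta>) (of_real m) = of_real (psi \<theta> m)"
  using U_Inv assms unfolding Inv_def phi_def psi_def by (auto simp: of_real_Re)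

lemma phi_small:
  assumes "\<bar>m\<bar> < bm"
  shows "\<bar>m * phi \<theta> m\<bar> \<le> r0/2" "\<bar>m * psi \<theta> m\<bar> \<le> r0/2"
proof -
  have z: "(of_real \<theta> :: complex) \<in> strip 1" by (simp add: real_in_strip)
  have w: "(of_real m :: complex) \<in> ball 0 bm" using assms by simp
  show "\<bar>m * phi \<theta> m\<bar> \<le> r0/2" using small[OF U_Inv(1) z w] U_real[OF assms] by (simp add: norm_mult abs_mult)
  show "\<bar>m * psi \<theta> m\<bar> \<le> r0/2" using small[OF U_Inv(2) z w] U_real[OF assms] by (simp add: norm_mult abs_mult)
qed

lemma phi_bound:
  assumes "\<bar>m\<bar> < bm"
  shows "\<bar>phi \<theta> m\<bar> \<le> R" "\<bar>psi \<theta> m\<bar> \<le> R"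
proof -
  have z: "(of_real \<theta> :: complex) \<in> strip 1" by (simp add: real_in_strip)
  have w: "(of_real m :: complex) \<in> ball 0 bm" using assms by simp
  show "\<bar>phi \<theta> m\<bar> \<le> R" using U_Inv(1) z w unfolding Inv_def phi_def by (meson abs_Re_le_cmod order_trans)
  show "\<bar>psi \<theta> m\<bar> \<le> R" using U_Inv(2) z w unfolding Inv_def psi_def by (meson abs_Re_le_cmod order_trans)
qed

lemma phi_per: "phi (\<theta> + 2*pi) m = phi \<theta> m" "psi (\<theta> + 2*pi) m = psi \<theta> m"
  using U_Inv unfolding Inv_def phi_def psi_def by (simp_all add: of_real_add)

lemma phi_ode:
  assumes m: "\<bar>m\<bar> < bm"
  shows "((\<lambda>s. phi s m) has_real_derivative (- ka * phi \<theta> m + g1r \<theta> (m * phi \<theta> m) (m * psi \<theta> m))) (at \<theta>)"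
    and "((\<lambda>s. psi s m) has_real_derivative (kb * psi \<theta> m + g2r \<theta> (m * phi \<theta> m) (m * psi \<theta> m))) (at \<theta>)"
proof -
  have z: "(of_real \<theta> :: complex) \<in> strip 1" by (simp add: real_in_strip)
  have w: "(of_real m :: complex) \<in> ball 0 bm" using m by simp
  have r2: "r0/2 \<le> r0" using r0 by simp
  have sm: "\<bar>m * phi \<theta> m\<bar> \<le> r0" "\<bar>m * psi \<theta> m\<bar> \<le> r0" using phi_small[OF m, of \<theta>] r2 by auto
  have gg1: "gg h1c (-1) U1 U2 (of_real \<theta>) (of_real m) = of_real (g1r \<theta> (m * phi \<theta> m) (m * psi \<theta> m))"
    unfolding gg_def U_real[OF m] using Phi_link(1)[OF sm] by simp
  have gg2: "gg h2c 1 U1 U2 (of_real \<theta>) (of_real m) = of_real (g2r \<theta> (m * phi \<theta> m) (m * psi \<theta> m))"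
    unfolding gg_def U_real[OF m] using Phi_link(2)[OF sm] by simp
  have "((\<lambda>x. U1 (of_real x) (of_real m)) has_vector_derivative
      (- of_real ka * U1 (of_real \<theta>) (of_real m) + gg h1c (-1) U1 U2 (of_real \<theta>) (of_real m))) (at \<theta>)"
    by (rule has_vector_derivative_real_field[OF U_ode(1)[OF z w]])
  then have "((\<lambda>x. Re (U1 (of_real x) (of_real m))) has_vector_derivative
      Re (- of_real ka * U1 (of_real \<theta>) (of_real m) + gg h1c (-1) U1 U2 (of_real \<theta>) (of_real m))) (at \<theta>)"
    by (rule bounded_linear.has_vector_derivative[OF bounded_linear_Re])
  then show "((\<lambda>s. phi s m) has_real_derivative (- ka * phi \<theta> m + g1r \<theta> (m * phi \<theta> m) (m * psi \<theta> m))) (at \<theta>)"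
    unfolding gg1 U_real[OF m] by (simp add: has_real_derivative_iff_has_vector_derivative phi_def[symmetric])
  have "((\<lambda>x. U2 (of_real x) (of_real m)) has_vector_derivative
      (of_real kb * U2 (of_real \<theta>) (of_real m) + gg h2c 1 U1 U2 (of_real \<theta>) (of_real m))) (at \<theta>)"
    by (rule has_vector_derivative_real_field[OF U_ode(2)[OF z w]])
  then have "((\<lambda>x. Re (U2 (of_real x) (of_real m))) has_vector_derivative
      Re (of_real kb * U2 (of_real \<theta>) (of_real m) + gg h2c 1 U1 U2 (of_real \<theta>) (of_real m))) (at \<theta>)"
    by (rule bounded_linear.has_vector_derivative[OF bounded_linear_Re])
  then show "((\<lambda>s. psi s m) has_real_derivative (kb * psi \<theta> m + g2r \<theta> (m * phi \<theta> m) (m * psi \<theta> m))) (at \<theta>)"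
    unfolding gg2 U_real[OF m] by (simp add: has_real_derivative_iff_has_vector_derivative psi_def[symmetric])
qed

end

context sysr begin

lemma uniq:
  fixes X1 Y1 X2 Y2 :: "real \<Rightarrow> real"
  assumes m: "0 \<le> m" "m \<le> bm"
    and pX1: "\<And>s. X1 (s + 2*pi) = X1 s" and pY1: "\<And>s. Y1 (s + 2*pi) = Y1 s"
    and pX2: "\<And>s. X2 (s + 2*pi) = X2 s" and pY2: "\<And>s. Y2 (s + 2*pi) = Y2 s"
    and dX1: "\<And>s. (X1 has_real_derivative (- ka * X1 s + m * g1r s (X1 s) (Y1 s))) (at s)"
    and dY1: "\<And>s. (Y1 has_real_derivative (kb * Y1 s + m * g2r s (X1 s) (Y1 s))) (at s)"
    and dX2: "\<And>s. (X2 has_real_derivative (- ka * X2 s + m * g1r s (X2 s) (Y2 s))) (at s)"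
    and dY2: "\<And>s. (Y2 has_real_derivative (kb * Y2 s + m * g2r s (X2 s) (Y2 s))) (at s)"
    and bX1: "\<And>s. \<bar>X1 s\<bar> \<le> r0/2" and bY1: "\<And>s. \<bar>Y1 s\<bar> \<le> r0/2"
    and bX2: "\<And>s. \<bar>X2 s\<bar> \<le> r0/2" and bY2: "\<And>s. \<bar>Y2 s\<bar> \<le> r0/2"
  shows "X1 \<theta> = X2 \<theta> \<and> Y1 \<theta> = Y2 \<theta>"
proof -
  define Ea where "Ea = exp (- ka * (2*pi))"
  define Eb where "Eb = exp (- kb * (2*pi))"
  have Ea: "0 < 1 - Ea" "ca * (1 - Ea) = 1" unfolding Ea_def ca_def using ka by auto
  have Eb: "0 < 1 - Eb" "cb * (1 - Eb) = 1" unfolding Eb_def cb_def using kb by auto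
  have step: "\<forall>s. \<bar>X1 s - X2 s\<bar> + \<bar>Y1 s - Y2 s\<bar> \<le> E/2"
    if E: "\<forall>s. \<bar>X1 s - X2 s\<bar> + \<bar>Y1 s - Y2 s\<bar> \<le> E" for E
  proof
    fix \<theta>
    have E0: "E \<ge> 0" using E by (meson abs_ge_zero add_nonneg_nonneg order_trans)
    have gd: "\<bar>g g\<theta> (X1 s') (Y1 s') - g g\<theta> (X2 s') (Y2 s')\<bar> \<le> Lam * E"
      if "g = g1r \<or> g = g2r" for g g\<theta> s'
    proof -
      have "\<bar>g g\<theta> (X1 s') (Y1 s') - g g\<theta> (X2 s') (Y2 s')\<bar> \<le> Lam * (\<bar>X1 s' - X2 s'\<bar> + \<bar>Y1 s' - Y2 s'\<bar>)"
        using that g_lip[OF bX1 bY1 bX2 bY2] by blast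
      also have "\<dots> \<le> Lam * E" using E Lam by (intro mult_left_mono) auto
      finally show ?thesis .
    qed
    have mLE: "0 \<le> m * (Lam * E)" using m Lam E0 by simp
    have ptb: "norm (exp (- k * r) * (m * a) - exp (- k * r) * (m * b)) \<le> m * (Lam * E)"
      if "\<bar>a - b\<bar> \<le> Lam * E" "r \<in> cbox 0 (2*pi)" "k > 0" for a b k r
    proof -
      have e1: "exp (- k * r) \<le> 1" "exp (- k * r) \<ge> 0" using that by (auto simp: cbox_interval)
      have "norm (exp (- k * r) * (m * a) - exp (- k * r) * (m * b)) = exp (- k * r) * (m * \<bar>a - b\<bar>)"
        using m by (simp add: abs_mult flip: right_diff_distrib)
      also have "\<dots> \<le> 1 * (m * (Lam * E))"
        using e1 that m mLE by (intro mult_mono mult_left_mono) auto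
      finally show ?thesis by simp
    qed
    have I1: "((\<lambda>r. exp (- ka * r) * (m * g1r (\<theta> - r) (X1 (\<theta> - r)) (Y1 (\<theta> - r)))
        - exp (- ka * r) * (m * g1r (\<theta> - r) (X2 (\<theta> - r)) (Y2 (\<theta> - r)))) has_integral
        ((1 - Ea) * X1 \<theta> - (1 - Ea) * X2 \<theta>)) (cbox 0 (2*pi))"
      unfolding cbox_interval Ea_def
      by (intro has_integral_diff per_int_rep1[OF pX1 dX1] per_int_rep1[OF pX2 dX2])
    have "norm ((1 - Ea) * X1 \<theta> - (1 - Ea) * X2 \<theta>) \<le> m * (Lam * E) * Henstock_Kurzweil_Integration.content (cbox 0 (2*pi))"
      by (rule has_integral_bound[OF mLE I1]) (use ptb gd ka in auto)
    then have "(1 - Ea) * \<bar>X1 \<theta> - X2 \<theta>\<bar> \<le> m * (Lam * E) * (2*pi)"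
      using Ea by (simp add: abs_mult flip: right_diff_distrib)
    then have "ca * ((1 - Ea) * \<bar>X1 \<theta> - X2 \<theta>\<bar>) \<le> ca * (m * (Lam * E) * (2*pi))"
      using ca by (intro mult_left_mono) auto
    then have X: "\<bar>X1 \<theta> - X2 \<theta>\<bar> \<le> ca * (m * (Lam * E) * (2*pi))" using Ea by (simp add: mult.assoc[symmetric])
    have I2: "((\<lambda>r. exp (- kb * r) * (m * g2r (\<theta> + r) (X1 (\<theta> + r)) (Y1 (\<theta> + r)))
        - exp (- kb * r) * (m * g2r (\<theta> + r) (X2 (\<theta> + r)) (Y2 (\<theta> + r)))) has_integral
        ((Eb - 1) * Y1 \<theta> - (Eb - 1) * Y2 \<theta>)) (cbox 0 (2*pi))"
      unfolding cbox_interval Eb_def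
      by (intro has_integral_diff per_int_rep2[OF pY1 dY1] per_int_rep2[OF pY2 dY2])
    have "norm ((Eb - 1) * Y1 \<theta> - (Eb - 1) * Y2 \<theta>) \<le> m * (Lam * E) * Henstock_Kurzweil_Integration.content (cbox 0 (2*pi))"
      by (rule has_integral_bound[OF mLE I2]) (use ptb gd kb in auto)
    then have "(1 - Eb) * \<bar>Y1 \<theta> - Y2 \<theta>\<bar> \<le> m * (Lam * E) * (2*pi)"
      using Eb by (simp add: abs_mult abs_minus_commute flip: right_diff_distrib)
    then have "cb * ((1 - Eb) * \<bar>Y1 \<theta> - Y2 \<theta>\<bar>) \<le> cb * (m * (Lam * E) * (2*pi))"
      using cb by (intro mult_left_mono) auto
    then have Y: "\<bar>Y1 \<theta> - Y2 \<theta>\<bar> \<le> cb * (m * (Lam * E) * (2*pi))" using Eb by (simp add: mult.assoc[symmetric])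
    have "ca * (m * (Lam * E) * (2*pi)) + cb * (m * (Lam * E) * (2*pi)) \<le> cm * (bm * (Lam * E) * (2*pi)) + cm * (bm * (Lam * E) * (2*pi))"
      using cm m Lam E0 ca cb by (intro add_mono mult_mono) auto
    also have "\<dots> = (4 * pi * cm * Lam * bm) * E" by (simp add: algebra_simps)
    also have "\<dots> \<le> 1/2 * E" using bm(3) E0 by (rule mult_right_mono)
    finally show "\<bar>X1 \<theta> - X2 \<theta>\<bar> + \<bar>Y1 \<theta> - Y2 \<theta>\<bar> \<le> E/2" using X Y by linarith
  qed
  have ind: "\<forall>s. \<bar>X1 s - X2 s\<bar> + \<bar>Y1 s - Y2 s\<bar> \<le> 2 * r0 * (1/2)^n" for n
  proof (induction n)
    case 0
    show ?case
    proof
      fix s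
      have "\<bar>X1 s - X2 s\<bar> \<le> r0" "\<bar>Y1 s - Y2 s\<bar> \<le> r0" using bX1[of s] bX2[of s] bY1[of s] bY2[of s] by linarith+
      then show "\<bar>X1 s - X2 s\<bar> + \<bar>Y1 s - Y2 s\<bar> \<le> 2 * r0 * (1/2)^0" by simp
    qed
  next
    case (Suc n)
    then show ?case using step[of "2 * r0 * (1/2)^n"] by simp
  qed
  have lim: "(\<lambda>n. 2 * r0 * (1/2::real)^n) \<longlonglongrightarrow> 0"
    by (intro tendsto_mult_right_zero LIMSEQ_power_zero) simp
  have "\<bar>X1 \<theta> - X2 \<theta>\<bar> + \<bar>Y1 \<theta> - Y2 \<theta>\<bar> \<le> 0"
    by (rule LIMSEQ_le_const[OF lim]) (use ind in blast)
  then show ?thesis by arith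
qed

end

lemma C3_mono:
  assumes "C3_bounded M K f" "K \<le> K'"
  shows "C3_bounded M K' f"
proof -
  obtain P where P: "P 0 0 = f"
    "\<forall>i j. i + j < 3 \<longrightarrow> (\<forall>\<theta>. \<forall>m\<in>M.
         ((\<lambda>s. P i j s m) has_real_derivative P (Suc i) j \<theta> m) (at \<theta>) \<and>
         ((\<lambda>s. P i j \<theta> s) has_real_derivative P i (Suc j) \<theta> m) (at m within M))"
    "\<forall>i j. i + j \<le> 3 \<longrightarrow> continuous_on (UNIV \<times> M) (\<lambda>(\<theta>, m). P i j \<theta> m) \<and>
         (\<forall>\<theta>. \<forall>m\<in>M. \<bar>P i j \<theta> m\<bar> \<le> K)"
    using assms(1) unfolding C3_bounded_def by blast
  show ?thesis unfolding C3_bounded_def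
  proof (intro exI[of _ P] conjI allI impI ballI)
    fix i j :: nat and \<theta> m assume "i + j \<le> 3" "m \<in> M"
    then show "\<bar>P i j \<theta> m\<bar> \<le> K'" using P(3) assms(2) by (meson order_trans)
  qed (use P in auto)
qed

context sysr begin

lemma sysr_main:
  assumes \<delta>: "0 < \<delta>" "\<delta> \<le> r0/2"
  shows "\<exists>\<mu>0 > 0. \<exists>K. C3_bounded {0..\<mu>0} K phi \<and> C3_bounded {0..\<mu>0} K psi \<and>
     (\<forall>\<mu> \<in> {0..\<mu>0}.
        (\<forall>\<theta>. phi (\<theta> + 2 * pi) \<mu> = phi \<theta> \<mu> \<and> psi (\<theta> + 2 * pi) \<mu> = psi \<theta> \<mu>) \<and>
        is_solution \<alpha> \<beta> \<omega> \<rho> h1 h2 H \<mu>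
          (\<lambda>t. \<mu> * phi (\<omega> * t) \<mu>) (\<lambda>t. \<mu> * psi (\<omega> * t) \<mu>) \<and>
        (\<forall>t. (\<mu> * phi (\<omega> * t) \<mu>, \<mu> * psi (\<omega> * t) \<mu>) \<in> ball (0, 0) \<delta>) \<and>
        (\<forall>x y. is_solution \<alpha> \<beta> \<omega> \<rho> h1 h2 H \<mu> x y \<and>
            (\<forall>t. x (t + 2 * pi / \<omega>) = x t \<and> y (t + 2 * pi / \<omega>) = y t) \<and>
            (\<forall>t. (x t, y t) \<in> cball (0, 0) \<delta>) \<longrightarrow>
            (\<forall>t. x t = \<mu> * phi (\<omega> * t) \<mu> \<and> y t = \<mu> * psi (\<omega> * t) \<mu>)))"
proof -
  define \<mu>0 where "\<mu>0 = min (bm/4) (\<delta>/(4*R))"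
  have \<mu>0: "\<mu>0 > 0" "\<mu>0 < bm/2" "\<mu>0 \<le> bm" "\<mu>0 * R \<le> \<delta>/4"
  proof -
    show "\<mu>0 > 0" unfolding \<mu>0_def using bm R \<delta> by auto
    show "\<mu>0 < bm/2" "\<mu>0 \<le> bm" unfolding \<mu>0_def using bm by auto
    have "\<mu>0 \<le> \<delta>/(4*R)" unfolding \<mu>0_def by simp
    then have "\<mu>0 * R \<le> \<delta>/(4*R) * R" using R by (intro mult_right_mono) auto
    also have "\<delta>/(4*R) * R = \<delta>/4" using R by (simp add: field_simps)
    finally show "\<mu>0 * R \<le> \<delta>/4" .
  qed
  have GU1: "Good (strip 1) (ball 0 bm) U1" and GU2: "Good (strip 1) (ball 0 bm) U2"
    using U_Inv unfolding Inv_def by auto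
  obtain K1 where K1: "C3_bounded {0..\<mu>0} K1 phi"
    using C3_from_Good[OF GU1 \<mu>0(1,2)] unfolding phi_def by blast
  obtain K2 where K2: "C3_bounded {0..\<mu>0} K2 psi"
    using C3_from_Good[OF GU2 \<mu>0(1,2)] unfolding psi_def by blast
  have C3: "C3_bounded {0..\<mu>0} (max K1 K2) phi \<and> C3_bounded {0..\<mu>0} (max K1 K2) psi"
    using C3_mono[OF K1] C3_mono[OF K2] by auto
  have \<omega>0: "\<omega> \<noteq> 0" using \<omega> by simp
  have kaw: "\<omega> * ka = \<alpha>" "\<omega> * kb = \<beta>" unfolding ka_def kb_def using \<omega>0 by auto
  have r2: "\<delta>/4 \<le> r0/2" using \<delta> by simp
  have main: "(\<forall>\<theta>. phi (\<theta> + 2 * pi) \<mu> = phi \<theta> \<mu> \<and> psi (\<theta> + 2 * pi) \<mu> = psi \<theta> \<mu>) \<and>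
        is_solution \<alpha> \<beta> \<omega> \<rho> h1 h2 H \<mu>
          (\<lambda>t. \<mu> * phi (\<omega> * t) \<mu>) (\<lambda>t. \<mu> * psi (\<omega> * t) \<mu>) \<and>
        (\<forall>t. (\<mu> * phi (\<omega> * t) \<mu>, \<mu> * psi (\<omega> * t) \<mu>) \<in> ball (0, 0) \<delta>) \<and>
        (\<forall>x y. is_solution \<alpha> \<beta> \<omega> \<rho> h1 h2 H \<mu> x y \<and>
            (\<forall>t. x (t + 2 * pi / \<omega>) = x t \<and> y (t + 2 * pi / \<omega>) = y t) \<and>
            (\<forall>t. (x t, y t) \<in> cball (0, 0) \<delta>) \<longrightarrow>
            (\<forall>t. x t = \<mu> * phi (\<omega> * t) \<mu> \<and> y t = \<mu> * psi (\<omega> * t) \<mu>))"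
    if \<mu>: "\<mu> \<in> {0..\<mu>0}" for \<mu>
  proof (intro conjI)
    have \<mu>b: "\<bar>\<mu>\<bar> < bm" using \<mu> \<mu>0 bm by auto
    have \<mu>m: "0 \<le> \<mu>" "\<mu> \<le> bm" using \<mu> \<mu>0 by auto
    show "\<forall>\<theta>. phi (\<theta> + 2 * pi) \<mu> = phi \<theta> \<mu> \<and> psi (\<theta> + 2 * pi) \<mu> = psi \<theta> \<mu>" using phi_per by simp
    have sm: "\<bar>\<mu> * phi \<theta> \<mu>\<bar> \<le> \<delta>/4" "\<bar>\<mu> * psi \<theta> \<mu>\<bar> \<le> \<delta>/4" for \<theta>
    proof -
      have "\<bar>\<mu>\<bar> * \<bar>phi \<theta> \<mu>\<bar> \<le> \<mu>0 * R" using \<mu> phi_bound[OF \<mu>b] by (intro mult_mono) auto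
      then show "\<bar>\<mu> * phi \<theta> \<mu>\<bar> \<le> \<delta>/4" using \<mu>0 by (simp add: abs_mult)
      have "\<bar>\<mu>\<bar> * \<bar>psi \<theta> \<mu>\<bar> \<le> \<mu>0 * R" using \<mu> phi_bound[OF \<mu>b] by (intro mult_mono) auto
      then show "\<bar>\<mu> * psi \<theta> \<mu>\<bar> \<le> \<delta>/4" using \<mu>0 by (simp add: abs_mult)
    qed
    have dX2: "((\<lambda>s. \<mu> * phi s \<mu>) has_real_derivative (- ka * (\<mu> * phi s \<mu>) + \<mu> * g1r s (\<mu> * phi s \<mu>) (\<mu> * psi s \<mu>))) (at s)" for s
      using DERIV_cmult[OF phi_ode(1)[OF \<mu>b, of s], of \<mu>] by (simp add: algebra_simps)
    have dY2: "((\<lambda>s. \<mu> * psi s \<mu>) has_real_derivative (kb * (\<mu> * psi s \<mu>) + \<mu> * g2r s (\<mu> * phi s \<mu>) (\<mu> * psi s \<mu>))) (at s)" for s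
      using DERIV_cmult[OF phi_ode(2)[OF \<mu>b, of s], of \<mu>] by (simp add: algebra_simps)
    show "is_solution \<alpha> \<beta> \<omega> \<rho> h1 h2 H \<mu> (\<lambda>t. \<mu> * phi (\<omega> * t) \<mu>) (\<lambda>t. \<mu> * psi (\<omega> * t) \<mu>)"
      unfolding is_solution_def
    proof (intro allI conjI)
      fix t
      have g: "((\<lambda>t. \<omega> * t) has_real_derivative \<omega>) (at t)" by (auto intro!: derivative_eq_intros)
      have a: "((\<lambda>t. \<mu> * phi (\<omega> * t) \<mu>) has_real_derivative
          (- ka * (\<mu> * phi (\<omega> * t) \<mu>) + \<mu> * g1r (\<omega> * t) (\<mu> * phi (\<omega> * t) \<mu>) (\<mu> * psi (\<omega> * t) \<mu>)) * \<omega>) (at t)"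
        using DERIV_chain2[where f="\<lambda>s. \<mu> * phi s \<mu>" and g="\<lambda>t. \<omega> * t" and x=t and s=UNIV, OF dX2 g] by simp
      have "(- ka * (\<mu> * phi (\<omega> * t) \<mu>) + \<mu> * g1r (\<omega> * t) (\<mu> * phi (\<omega> * t) \<mu>) (\<mu> * psi (\<omega> * t) \<mu>)) * \<omega>
        = - \<alpha> * (\<mu> * phi (\<omega> * t) \<mu>) - \<mu> * (1 + h1 (\<mu> * phi (\<omega> * t) \<mu>) (\<mu> * psi (\<omega> * t) \<mu>)) *
            (\<rho> * H (\<mu> * phi (\<omega> * t) \<mu>) (\<mu> * psi (\<omega> * t) \<mu>) + sin (\<omega> * t))"
        unfolding g1r_def using \<omega>0 kaw by (simp add: field_simps)
      then show "((\<lambda>t. \<mu> * phi (\<omega> * t) \<mu>) has_real_derivative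
          - \<alpha> * (\<mu> * phi (\<omega> * t) \<mu>) - \<mu> * (1 + h1 (\<mu> * phi (\<omega> * t) \<mu>) (\<mu> * psi (\<omega> * t) \<mu>)) *
            (\<rho> * H (\<mu> * phi (\<omega> * t) \<mu>) (\<mu> * psi (\<omega> * t) \<mu>) + sin (\<omega> * t))) (at t)"
        using a by simp
      have b: "((\<lambda>t. \<mu> * psi (\<omega> * t) \<mu>) has_real_derivative
          (kb * (\<mu> * psi (\<omega> * t) \<mu>) + \<mu> * g2r (\<omega> * t) (\<mu> * phi (\<omega> * t) \<mu>) (\<mu> * psi (\<omega> * t) \<mu>)) * \<omega>) (at t)"
        using DERIV_chain2[where f="\<lambda>s. \<mu> * psi s \<mu>" and g="\<lambda>t. \<omega> * t" and x=t and s=UNIV, OF dY2 g] by simp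
      have "(kb * (\<mu> * psi (\<omega> * t) \<mu>) + \<mu> * g2r (\<omega> * t) (\<mu> * phi (\<omega> * t) \<mu>) (\<mu> * psi (\<omega> * t) \<mu>)) * \<omega>
        = \<beta> * (\<mu> * psi (\<omega> * t) \<mu>) + \<mu> * (1 + h2 (\<mu> * phi (\<omega> * t) \<mu>) (\<mu> * psi (\<omega> * t) \<mu>)) *
            (\<rho> * H (\<mu> * phi (\<omega> * t) \<mu>) (\<mu> * psi (\<omega> * t) \<mu>) + sin (\<omega> * t))"
        unfolding g2r_def using \<omega>0 kaw by (simp add: field_simps)
      then show "((\<lambda>t. \<mu> * psi (\<omega> * t) \<mu>) has_real_derivative
          \<beta> * (\<mu> * psi (\<omega> * t) \<mu>) + \<mu> * (1 + h2 (\<mu> * phi (\<omega> * t) \<mu>) (\<mu> * psi (\<omega> * t) \<mu>)) *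
            (\<rho> * H (\<mu> * phi (\<omega> * t) \<mu>) (\<mu> * psi (\<omega> * t) \<mu>) + sin (\<omega> * t))) (at t)"
        using b by simp
    qed
    show "\<forall>t. (\<mu> * phi (\<omega> * t) \<mu>, \<mu> * psi (\<omega> * t) \<mu>) \<in> ball (0, 0) \<delta>"
    proof
      fix t
      have "norm (\<mu> * phi (\<omega> * t) \<mu>, \<mu> * psi (\<omega> * t) \<mu>) \<le> norm (\<mu> * phi (\<omega> * t) \<mu>) + norm (\<mu> * psi (\<omega> * t) \<mu>)"
        by (rule norm_Pair_le)
      also have "\<dots> \<le> \<delta>/4 + \<delta>/4" using sm by (intro add_mono) auto
      finally have "norm (\<mu> * phi (\<omega> * t) \<mu>, \<mu> * psi (\<omega> * t) \<mu>) < \<delta>" using \<delta> by simp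
      then show "(\<mu> * phi (\<omega> * t) \<mu>, \<mu> * psi (\<omega> * t) \<mu>) \<in> ball (0, 0) \<delta>"
        by (simp add: mem_ball_0 flip: zero_prod_def)
    qed
    show "\<forall>x y. is_solution \<alpha> \<beta> \<omega> \<rho> h1 h2 H \<mu> x y \<and>
            (\<forall>t. x (t + 2 * pi / \<omega>) = x t \<and> y (t + 2 * pi / \<omega>) = y t) \<and>
            (\<forall>t. (x t, y t) \<in> cball (0, 0) \<delta>) \<longrightarrow>
            (\<forall>t. x t = \<mu> * phi (\<omega> * t) \<mu> \<and> y t = \<mu> * psi (\<omega> * t) \<mu>)"
    proof (intro allI impI)
      fix x y :: "real \<Rightarrow> real" and t :: real
      assume A: "is_solution \<alpha> \<beta> \<omega> \<rho> h1 h2 H \<mu> x y \<and>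
            (\<forall>t. x (t + 2 * pi / \<omega>) = x t \<and> y (t + 2 * pi / \<omega>) = y t) \<and>
            (\<forall>t. (x t, y t) \<in> cball (0, 0) \<delta>)"
      have sol: "\<And>t. (x has_real_derivative
        (- \<alpha> * x t - \<mu> * (1 + h1 (x t) (y t)) * (\<rho> * H (x t) (y t) + sin (\<omega> * t)))) (at t)"
        "\<And>t. (y has_real_derivative
        (\<beta> * y t + \<mu> * (1 + h2 (x t) (y t)) * (\<rho> * H (x t) (y t) + sin (\<omega> * t)))) (at t)"
        using A unfolding is_solution_def by auto
      have bxy: "\<bar>x t\<bar> \<le> r0/2 \<and> \<bar>y t\<bar> \<le> r0/2" for t
      proof -
        have "(x t, y t) \<in> cball (0,0) \<delta>" using A by blast
        then have "norm (x t, y t) \<le> \<delta>" by (simp only: zero_prod_def[symmetric] mem_cball_0)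
        then show ?thesis using norm_fst_le[of "x t" "y t"] norm_snd_le[of "y t" "x t"] \<delta> by auto
      qed
      define X1 where "X1 s = x (s / \<omega>)" for s
      define Y1 where "Y1 s = y (s / \<omega>)" for s
      have g: "((\<lambda>s. s / \<omega>) has_real_derivative 1/\<omega>) (at s)" for s using \<omega>0 by (auto intro!: derivative_eq_intros)
      have dX1: "(X1 has_real_derivative (- ka * X1 s + \<mu> * g1r s (X1 s) (Y1 s))) (at s)" for s
      proof -
        have "(X1 has_real_derivative (- \<alpha> * x (s/\<omega>) - \<mu> * (1 + h1 (x (s/\<omega>)) (y (s/\<omega>))) *
            (\<rho> * H (x (s/\<omega>)) (y (s/\<omega>)) + sin (\<omega> * (s/\<omega>)))) * (1/\<omega>)) (at s)"
          unfolding X1_def using DERIV_chain2[where f=x and g="\<lambda>s. s/\<omega>" and x=s and s=UNIV, OF sol(1) g] by simp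
        moreover have "(- \<alpha> * x (s/\<omega>) - \<mu> * (1 + h1 (x (s/\<omega>)) (y (s/\<omega>))) *
            (\<rho> * H (x (s/\<omega>)) (y (s/\<omega>)) + sin (\<omega> * (s/\<omega>)))) * (1/\<omega>) = - ka * X1 s + \<mu> * g1r s (X1 s) (Y1 s)"
          unfolding X1_def Y1_def g1r_def ka_def using \<omega>0 by (simp add: field_simps)
        ultimately show ?thesis by simp
      qed
      have dY1: "(Y1 has_real_derivative (kb * Y1 s + \<mu> * g2r s (X1 s) (Y1 s))) (at s)" for s
      proof -
        have "(Y1 has_real_derivative (\<beta> * y (s/\<omega>) + \<mu> * (1 + h2 (x (s/\<omega>)) (y (s/\<omega>))) *
            (\<rho> * H (x (s/\<omega>)) (y (s/\<omega>)) + sin (\<omega> * (s/\<omega>)))) * (1/\<omega>)) (at s)"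
          unfolding Y1_def using DERIV_chain2[where f=y and g="\<lambda>s. s/\<omega>" and x=s and s=UNIV, OF sol(2) g] by simp
        moreover have "(\<beta> * y (s/\<omega>) + \<mu> * (1 + h2 (x (s/\<omega>)) (y (s/\<omega>))) *
            (\<rho> * H (x (s/\<omega>)) (y (s/\<omega>)) + sin (\<omega> * (s/\<omega>)))) * (1/\<omega>) = kb * Y1 s + \<mu> * g2r s (X1 s) (Y1 s)"
          unfolding X1_def Y1_def g2r_def kb_def using \<omega>0 by (simp add: field_simps)
        ultimately show ?thesis by simp
      qed
      have pX1: "X1 (s + 2*pi) = X1 s" and pY1: "Y1 (s + 2*pi) = Y1 s" for s
      proof -
        have "(s + 2*pi) / \<omega> = s/\<omega> + 2 * pi / \<omega>" by (simp add: add_divide_distrib)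
        then show "X1 (s + 2*pi) = X1 s" "Y1 (s + 2*pi) = Y1 s" unfolding X1_def Y1_def using A by auto
      qed
      have "X1 (\<omega> * t) = \<mu> * phi (\<omega> * t) \<mu> \<and> Y1 (\<omega> * t) = \<mu> * psi (\<omega> * t) \<mu>"
      proof (rule uniq[OF \<mu>m pX1 pY1 _ _ dX1 dY1 dX2 dY2])
        show "\<mu> * phi (s + 2 * pi) \<mu> = \<mu> * phi s \<mu>" "\<mu> * psi (s + 2 * pi) \<mu> = \<mu> * psi s \<mu>" for s
          using phi_per by simp_all
        show "\<bar>X1 s\<bar> \<le> r0/2" "\<bar>Y1 s\<bar> \<le> r0/2" for s unfolding X1_def Y1_def using bxy by auto
        show "\<bar>\<mu> * phi s \<mu>\<bar> \<le> r0/2" "\<bar>\<mu> * psi s \<mu>\<bar> \<le> r0/2" for s using sm r2 by (meson order_trans)+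
      qed
      then show "x t = \<mu> * phi (\<omega> * t) \<mu> \<and> y t = \<mu> * psi (\<omega> * t) \<mu>"
        unfolding X1_def Y1_def using \<omega>0 by simp
    qed
  qed
  show ?thesis using \<mu>0(1) C3 main by blast
qed

end

theorem proposition5:
  fixes \<alpha> \<beta> \<omega> \<rho> :: real
    and h1 h2 H :: "real \<Rightarrow> real \<Rightarrow> real"
    and U :: "(real \<times> real) set"
  assumes "\<alpha> > 0" "\<beta> > 0" "\<omega> > 0"
    and "open U" "(0, 0) \<in> U"
    and "real_analytic2_on h1 U" "real_analytic2_on h2 U" "real_analytic2_on H U"
    and "h1 0 0 = 0" "h2 0 0 = 0"
  shows "\<exists>\<mu>0 > 0. \<exists>K. \<exists>\<delta> > 0. \<exists>\<phi> \<psi> :: real \<Rightarrow> real \<Rightarrow> real.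
     cball (0, 0) \<delta> \<subseteq> U \<and>
     C3_bounded {0..\<mu>0} K \<phi> \<and> C3_bounded {0..\<mu>0} K \<psi> \<and>
     (\<forall>\<mu> \<in> {0..\<mu>0}.
        (\<forall>\<theta>. \<phi> (\<theta> + 2 * pi) \<mu> = \<phi> \<theta> \<mu> \<and> \<psi> (\<theta> + 2 * pi) \<mu> = \<psi> \<theta> \<mu>) \<and>
        is_solution \<alpha> \<beta> \<omega> \<rho> h1 h2 H \<mu>
          (\<lambda>t. \<mu> * \<phi> (\<omega> * t) \<mu>) (\<lambda>t. \<mu> * \<psi> (\<omega> * t) \<mu>) \<and>
        (\<forall>t. (\<mu> * \<phi> (\<omega> * t) \<mu>, \<mu> * \<psi> (\<omega> * t) \<mu>) \<in> ball (0, 0) \<delta>) \<and>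
        (\<forall>x y. is_solution \<alpha> \<beta> \<omega> \<rho> h1 h2 H \<mu> x y \<and>
            (\<forall>t. x (t + 2 * pi / \<omega>) = x t \<and> y (t + 2 * pi / \<omega>) = y t) \<and>
            (\<forall>t. (x t, y t) \<in> cball (0, 0) \<delta>) \<longrightarrow>
            (\<forall>t. x t = \<mu> * \<phi> (\<omega> * t) \<mu> \<and> y t = \<mu> * \<psi> (\<omega> * t) \<mu>)))"
proof -
  obtain r1 h1c S1 L1 where r1: "r1 > 0" "S1 \<ge> 0" "L1 \<ge> 0"
    "\<forall>X A B. open X \<longrightarrow> A holomorphic_on X \<longrightarrow> B holomorphic_on X \<longrightarrow>
       (\<forall>s\<in>X. norm (A s) \<le> r1 \<and> norm (B s) \<le> r1) \<longrightarrow> (\<lambda>s. h1c (A s) (B s)) holomorphic_on X"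
    "\<forall>z w. norm z \<le> r1 \<longrightarrow> norm w \<le> r1 \<longrightarrow> norm (h1c z w) \<le> S1"
    "\<forall>z w z' w'. norm z \<le> r1/2 \<longrightarrow> norm w \<le> r1/2 \<longrightarrow> norm z' \<le> r1/2 \<longrightarrow> norm w' \<le> r1/2 \<longrightarrow>
       norm (h1c z w - h1c z' w') \<le> L1 * (norm (z-z') + norm (w-w'))"
    "\<forall>x y. \<bar>x\<bar> \<le> r1 \<longrightarrow> \<bar>y\<bar> \<le> r1 \<longrightarrow> h1c (of_real x) (of_real y) = of_real (h1 x y)"
    using analytic_ext[OF assms(6,5)] by blast
  obtain r2 h2c S2 L2 where r2: "r2 > 0" "S2 \<ge> 0" "L2 \<ge> 0"
    "\<forall>X A B. open X \<longrightarrow> A holomorphic_on X \<longrightarrow> B holomorphic_on X \<longrightarrow>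
       (\<forall>s\<in>X. norm (A s) \<le> r2 \<and> norm (B s) \<le> r2) \<longrightarrow> (\<lambda>s. h2c (A s) (B s)) holomorphic_on X"
    "\<forall>z w. norm z \<le> r2 \<longrightarrow> norm w \<le> r2 \<longrightarrow> norm (h2c z w) \<le> S2"
    "\<forall>z w z' w'. norm z \<le> r2/2 \<longrightarrow> norm w \<le> r2/2 \<longrightarrow> norm z' \<le> r2/2 \<longrightarrow> norm w' \<le> r2/2 \<longrightarrow>
       norm (h2c z w - h2c z' w') \<le> L2 * (norm (z-z') + norm (w-w'))"
    "\<forall>x y. \<bar>x\<bar> \<le> r2 \<longrightarrow> \<bar>y\<bar> \<le> r2 \<longrightarrow> h2c (of_real x) (of_real y) = of_real (h2 x y)"
    using analytic_ext[OF assms(7,5)] by blast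
  obtain r3 Hc S3 L3 where r3: "r3 > 0" "S3 \<ge> 0" "L3 \<ge> 0"
    "\<forall>X A B. open X \<longrightarrow> A holomorphic_on X \<longrightarrow> B holomorphic_on X \<longrightarrow>
       (\<forall>s\<in>X. norm (A s) \<le> r3 \<and> norm (B s) \<le> r3) \<longrightarrow> (\<lambda>s. Hc (A s) (B s)) holomorphic_on X"
    "\<forall>z w. norm z \<le> r3 \<longrightarrow> norm w \<le> r3 \<longrightarrow> norm (Hc z w) \<le> S3"
    "\<forall>z w z' w'. norm z \<le> r3/2 \<longrightarrow> norm w \<le> r3/2 \<longrightarrow> norm z' \<le> r3/2 \<longrightarrow> norm w' \<le> r3/2 \<longrightarrow>
       norm (Hc z w - Hc z' w') \<le> L3 * (norm (z-z') + norm (w-w'))"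
    "\<forall>x y. \<bar>x\<bar> \<le> r3 \<longrightarrow> \<bar>y\<bar> \<le> r3 \<longrightarrow> Hc (of_real x) (of_real y) = of_real (H x y)"
    using analytic_ext[OF assms(8,5)] by blast
  define r0 where "r0 = min r1 (min r2 r3)"
  define S where "S = max S1 (max S2 S3)"
  define L where "L = max L1 (max L2 L3)"
  have r0: "r0 > 0" "r0 \<le> r1" "r0 \<le> r2" "r0 \<le> r3" unfolding r0_def using r1 r2 r3 by auto
  have S: "S \<ge> 0" "S1 \<le> S" "S2 \<le> S" "S3 \<le> S" unfolding S_def using r1 by auto
  have L: "L \<ge> 0" "L1 \<le> L" "L2 \<le> L" "L3 \<le> L" unfolding L_def using r1 by auto
  have lipmono: "norm a \<le> Lk * d \<Longrightarrow> Lk \<le> L \<Longrightarrow> d \<ge> 0 \<Longrightarrow> norm a \<le> L * d" for a :: complex and Lk d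
    by (meson mult_right_mono order_trans)
  interpret SR: sysr \<alpha> \<beta> \<omega> \<rho> h1c h2c Hc r0 S L h1 h2 H
  proof (unfold_locales)
    show "\<alpha> > 0" "\<beta> > 0" "\<omega> > 0" using assms by auto
    show "r0 > 0" "S \<ge> 0" "L \<ge> 0" using r0 S L by auto
  next
    fix hc and X :: "complex set" and A B :: "complex \<Rightarrow> complex" assume hc: "hc \<in> {h1c, h2c, Hc}" and X: "open X" and A: "A holomorphic_on X"
      and B: "B holomorphic_on X" and AB: "\<forall>s\<in>X. norm (A s) \<le> r0 \<and> norm (B s) \<le> r0"
    have AB1: "\<forall>s\<in>X. norm (A s) \<le> r1 \<and> norm (B s) \<le> r1" using AB r0 by (meson order_trans)
    have AB2: "\<forall>s\<in>X. norm (A s) \<le> r2 \<and> norm (B s) \<le> r2" using AB r0 by (meson order_trans)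
    have AB3: "\<forall>s\<in>X. norm (A s) \<le> r3 \<and> norm (B s) \<le> r3" using AB r0 by (meson order_trans)
    show "(\<lambda>s. hc (A s) (B s)) holomorphic_on X"
      using hc r1(4) r2(4) r3(4) X A B AB1 AB2 AB3 by blast
  next
    fix hc and z w :: complex assume hc: "hc \<in> {h1c, h2c, Hc}" and z: "norm z \<le> r0" and w: "norm w \<le> r0"
    show "norm (hc z w) \<le> S"
    proof -
      have "norm (h1c z w) \<le> S" using r1(5) z w r0 S by (meson order_trans)
      moreover have "norm (h2c z w) \<le> S" using r2(5) z w r0 S by (meson order_trans)
      moreover have "norm (Hc z w) \<le> S" using r3(5) z w r0 S by (meson order_trans)
      ultimately show ?thesis using hc by blast
    qed
  next
    fix hc and z w z' w' :: complex assume hc: "hc \<in> {h1c, h2c, Hc}" and n: "norm z \<le> r0/2" "norm w \<le> r0/2" "norm z' \<le> r0/2" "norm w' \<le> r0/2"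
    have d0: "norm (z - z') + norm (w - w') \<ge> 0" by simp
    have "norm (h1c z w - h1c z' w') \<le> L * (norm (z-z') + norm (w-w'))"
    proof -
      have "norm z \<le> r1/2" "norm w \<le> r1/2" "norm z' \<le> r1/2" "norm w' \<le> r1/2" using n r0 by auto
      then show ?thesis using r1(6) lipmono L d0 by blast
    qed
    moreover have "norm (h2c z w - h2c z' w') \<le> L * (norm (z-z') + norm (w-w'))"
    proof -
      have "norm z \<le> r2/2" "norm w \<le> r2/2" "norm z' \<le> r2/2" "norm w' \<le> r2/2" using n r0 by auto
      then show ?thesis using r2(6) lipmono L d0 by blast
    qed
    moreover have "norm (Hc z w - Hc z' w') \<le> L * (norm (z-z') + norm (w-w'))"
    proof -
      have "norm z \<le> r3/2" "norm w \<le> r3/2" "norm z' \<le> r3/2" "norm w' \<le> r3/2" using n r0 by auto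
      then show ?thesis using r3(6) lipmono L d0 by blast
    qed
    ultimately show "norm (hc z w - hc z' w') \<le> L * (norm (z-z') + norm (w-w'))" using hc by blast
  next
    fix hc and x y :: real assume hc: "hc \<in> {h1c, h2c, Hc}" and xy: "\<bar>x\<bar> \<le> r0" "\<bar>y\<bar> \<le> r0"
    have "h1c (of_real x) (of_real y) \<in> \<real>" using r1(7) xy r0 by (metis Reals_of_real order_trans)
    moreover have "h2c (of_real x) (of_real y) \<in> \<real>" using r2(7) xy r0 by (metis Reals_of_real order_trans)
    moreover have "Hc (of_real x) (of_real y) \<in> \<real>" using r3(7) xy r0 by (metis Reals_of_real order_trans)
    ultimately show "hc (of_real x) (of_real y) \<in> \<real>" using hc by blast
  next
    fix x y :: real assume xy: "\<bar>x\<bar> \<le> r0" "\<bar>y\<bar> \<le> r0"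
    show "h1c (of_real x) (of_real y) = of_real (h1 x y)" using r1(7) xy r0 by (meson order_trans)
    show "h2c (of_real x) (of_real y) = of_real (h2 x y)" using r2(7) xy r0 by (meson order_trans)
    show "Hc (of_real x) (of_real y) = of_real (H x y)" using r3(7) xy r0 by (meson order_trans)
  qed
  obtain \<epsilon> where \<epsilon>: "\<epsilon> > 0" "ball (0,0) \<epsilon> \<subseteq> U" using assms(4,5) openE by blast
  define \<delta> where "\<delta> = min (\<epsilon>/2) (r0/2)"
  have \<delta>: "0 < \<delta>" "\<delta> \<le> r0/2" unfolding \<delta>_def using \<epsilon> r0 by auto
  have cb: "cball (0::real,0::real) \<delta> \<subseteq> U"
  proof -
    have "\<delta> < \<epsilon>" unfolding \<delta>_def using \<epsilon> by auto
    then have "cball (0::real,0::real) \<delta> \<subseteq> ball (0,0) \<epsilon>" by (simp add: cball_subset_ball_iff)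
    then show ?thesis using \<epsilon> by blast
  qed
  show ?thesis using SR.sysr_main[OF \<delta>] \<delta>(1) cb by blast
qed

end
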